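(* Let $\gamma\in(0,1)$, let $\phi(z)=\max\{z,\gamma z\}$, let $m_1,m_2\ge 1$, $m=m_1+m_2$, and consider the network $$f(x;W)=\sum_{j=1}^{m_1}\frac{1}{\sqrt m}\phi(v_j^\top x)-\sum_{j=1}^{m_2}\frac{1}{\sqrt m}\phi(u_j^\top x),$$ where $W\in\mathbb{R}^{m\times d}$ has rows $v_1,\dots,v_{m_1},u_1,\dots,u_{m_2}$. Let $\{(x_i,y_i)\}_{i=1}^n\subseteq\mathbb{R}^d\times\{\pm1\}$, $R_{\max}=\max_i\|x_i\|$, $R_{\min}=\min_i\|x_i\|$, $R=R_{\max}/R_{\min}$, $I=[n]$, $I_+=\{i:y_i=1\}$, $I_-=\{i:y_i=-1\}$, and assume $$R_{\min}^2\ \ge\ 3\gamma^{-3}R^2\,n\,\max_{i\neq j}|\langle x_i,x_j\rangle|.$$ Let $W$ be a KKT point of the problem $$(\mathrm{P})\qquad \min_W \tfrac12\|W\|_F^2\quad\text{s.t.}\quad y_i f(x_i;W)\ge 1\ \ \forall i\in[n].$$ Then: 1. $y_if(x_i;W)=1$ for all $i\in I$. 2. There exist $v,u\in\mathbb{R}^d$ with $v=v_1=\dots=v_{m_1}$ and $u=u_1=\dots=u_{m_2}$; hence $\mathrm{rank}(W)\le 2$. 3. There exist $\lambda_i\in\left(\frac{1}{2R_{\max}^2},\frac{3}{2\gamma^2R_{\min}^2}\right)$, $i\in I$, such that $v=\frac{1}{\sqrt m}\sum_{i\in I_+}\lambda_ix_i-\frac{\gamma}{\sqrt m}\sum_{i\in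 I_-}\lambda_ix_i$ and $u=\frac{1}{\sqrt m}\sum_{i\in I_-}\lambda_ix_i-\frac{\gamma}{\sqrt m}\sum_{i\in I_+}\lambda_ix_i$. Moreover $y_iv^\top x_i>0$ and $y_iu^\top x_i<0$ for all $i\in I$. 4. $W$ is a global optimum of (P), and (P) has a unique global optimum. 5. The pair $(v,u)$ is the (unique) global optimum of the convex problem $$\min_{v,u\in\mathbb{R}^d}\tfrac{m_1}{2}\|v\|^2+\tfrac{m_2}{2}\|u\|^2\ \text{ s.t. }\ \tfrac{m_1}{\sqrt m}v^\top x_i-\gamma\tfrac{m_2}{\sqrt m}u^\top x_i\ge1\ (i\in I_+),\ \ \tfrac{m_2}{\sqrt m}u^\top x_i-\gamma\tfrac{m_1}{\sqrt m}v^\top x_i\ge1\ (i\in I_-).$$ 6. With $z=\frac{m_1}{\sqrt m}v-\frac{m_2}{\sqrt m}u$, for every $x\in\mathbb{R}^d$, $\mathrm{sign}(f(x;W))=\mathrm{sign}(z^\top x)$. 7. For all $i\in I$, $y_iz^\top x_i\ge1$, and $\|z\|\le\frac{2}{\kappa+\gamma}\|z^*\|$, where $\kappa=\sqrt{\min\{m_1,m_2\}/\max\{m_1,m_2\}}$ and $z^*=\arg\min_{\tilde z}\|\tilde z\|$ subject to $y_i\tilde z^\top x_i\ge1$ for all $i$. However, $z$ need not be an $\ell_2$-max-margin linear predictor: there is a dataset satisfying the hypotheses (with $\gamma=1/2$, $m_1=m_2$, $d=3$, $n=3$) for which $z$ is not a KKT point of $\min_{\tilde z}\frac12\|\tilde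 z\|^2$ s.t. $y_i\tilde z^\top x_i\ge\beta$ $\forall i$, for any $\beta>0$.
   Context: $\mathrm{sign}(z)=1$ if $z>0$ and $-1$ otherwise. KKT points for nonsmooth problems are defined via the Clarke subdifferential $\partial^\circ f(x)=\mathrm{conv}\{\lim_k\nabla f(x_k): x_k\to x,\ f \text{ differentiable at }x_k\}$: for $\min f(x)$ s.t. $g_n(x)\le0$ ($n\in[N]$), with $f,g_n$ locally Lipschitz, a feasible $x$ is a KKT point if there exist $\lambda_1,\dots,\lambda_N\ge0$ with $0\in\partial^\circ f(x)+\sum_n\lambda_n\partial^\circ g_n(x)$ and $\lambda_ng_n(x)=0$ for all $n$. For (P), the constraints are $g_i(W)=1-y_if(x_i;W)\le0$. *)

theory Defs
  imports "HOL-Analysis.Analysis"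
begin

definition sign :: "real \<Rightarrow> real" where
  "sign z = (if z > 0 then 1 else -1)"

definition leaky :: "real \<Rightarrow> real \<Rightarrow> real" where
  "leaky \<gamma> z = max z (\<gamma> * z)"

text \<open>Parameters W: rows v_1..v_m1 (first component, indexed by 'm1) and
  u_1..u_m2 (second component, indexed by 'm2); m1 = CARD('m1), m2 = CARD('m2).
  The norm of the pair is the Frobenius norm of W.\<close>
definition net :: "real \<Rightarrow> (real^'d^'m1::finite) \<times> (real^'d^'m2::finite) \<Rightarrow> real^'d \<Rightarrow> real" where
  "net \<gamma> W x =
     (\<Sum>j\<in>UNIV. (1 / sqrt (real (CARD('m1) + CARD('m2)))) * leaky \<gamma> ((fst W $ j) \<bullet> x))
   - (\<Sum>j\<in>UNIV. (1 / sqrt (real (CARD('m1) + CARD('m2)))) * leaky \<gamma> ((snd W $ j) \<bullet> x))"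

definition clarke_subdiff :: "('a::euclidean_space \<Rightarrow> real) \<Rightarrow> 'a \<Rightarrow> 'a set" where
  "clarke_subdiff f x = convex hull
     {g. \<exists>xs gs. xs \<longlonglongrightarrow> x \<and>
                 (\<forall>k. (f has_derivative (\<lambda>h. gs k \<bullet> h)) (at (xs k))) \<and>
                 gs \<longlonglongrightarrow> g}"

definition kkt_point :: "('a::euclidean_space \<Rightarrow> real) \<Rightarrow> ('i::finite \<Rightarrow> 'a \<Rightarrow> real) \<Rightarrow> 'a \<Rightarrow> bool" where
  "kkt_point f g x \<longleftrightarrow>
     (\<forall>n. g n x \<le> 0) \<and>
     (\<exists>lam :: 'i \<Rightarrow> real. (\<forall>n. lam n \<ge> 0) \<and> (\<forall>n. lam n * g n x = 0) \<and>
        0 \<in> {a + (\<Sum>n\<in>UNIV. lam n *\<^sub>R b n) | a b.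
                a \<in> clarke_subdiff f x \<and> (\<forall>n. b n \<in> clarke_subdiff (g n) x)})"

definition P_obj :: "(real^'d^'m1::finite) \<times> (real^'d^'m2::finite) \<Rightarrow> real" where
  "P_obj W = (1/2) * (norm W)^2"

definition P_cons :: "real \<Rightarrow> ('n \<Rightarrow> real^'d) \<Rightarrow> ('n \<Rightarrow> real) \<Rightarrow> 'n \<Rightarrow>
     (real^'d^'m1::finite) \<times> (real^'d^'m2::finite) \<Rightarrow> real" where
  "P_cons \<gamma> x y i W = 1 - y i * net \<gamma> W (x i)"

definition P_feasible :: "real \<Rightarrow> ('n \<Rightarrow> real^'d) \<Rightarrow> ('n \<Rightarrow> real) \<Rightarrow>
     (real^'d^'m1::finite) \<times> (real^'d^'m2::finite) \<Rightarrow> bool" where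
  "P_feasible \<gamma> x y W \<longleftrightarrow> (\<forall>i. y i * net \<gamma> W (x i) \<ge> 1)"

definition P_global_opt :: "real \<Rightarrow> ('n \<Rightarrow> real^'d) \<Rightarrow> ('n \<Rightarrow> real) \<Rightarrow>
     (real^'d^'m1::finite) \<times> (real^'d^'m2::finite) \<Rightarrow> bool" where
  "P_global_opt \<gamma> x y W \<longleftrightarrow> P_feasible \<gamma> x y W \<and>
     (\<forall>W' :: (real^'d^'m1) \<times> (real^'d^'m2). P_feasible \<gamma> x y W' \<longrightarrow> P_obj W \<le> P_obj W')"

definition Rmax :: "('n::finite \<Rightarrow> real^'d) \<Rightarrow> real" where
  "Rmax x = Max (range (\<lambda>i. norm (x i)))"

definition Rmin :: "('n::finite \<Rightarrow> real^'d) \<Rightarrow> real" where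
  "Rmin x = Min (range (\<lambda>i. norm (x i)))"

text \<open>Hypotheses on the data set (labels in {+1,-1}, nonzero inputs so that R is
  defined, and near-orthogonality; for n = 1 the max over i ~= j is vacuous).\<close>
definition data_hyp :: "real \<Rightarrow> ('n::finite \<Rightarrow> real^'d) \<Rightarrow> ('n \<Rightarrow> real) \<Rightarrow> bool" where
  "data_hyp \<gamma> x y \<longleftrightarrow>
     (\<forall>i. y i = 1 \<or> y i = -1) \<and> (\<forall>i. x i \<noteq> 0) \<and>
     (\<forall>i j. i \<noteq> j \<longrightarrow>
        (Rmin x)^2 \<ge> 3 * (1 / \<gamma>^3) * (Rmax x / Rmin x)^2 * real CARD('n) * \<bar>x i \<bullet> x j\<bar>)"

definition cvx_obj :: "nat \<Rightarrow> nat \<Rightarrow> real^'d \<Rightarrow> real^'d \<Rightarrow> real" where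
  "cvx_obj m1 m2 v u = real m1 / 2 * (norm v)^2 + real m2 / 2 * (norm u)^2"

definition cvx_feasible :: "nat \<Rightarrow> nat \<Rightarrow> real \<Rightarrow> ('n \<Rightarrow> real^'d) \<Rightarrow> ('n \<Rightarrow> real) \<Rightarrow>
     real^'d \<Rightarrow> real^'d \<Rightarrow> bool" where
  "cvx_feasible m1 m2 \<gamma> x y v u \<longleftrightarrow>
     (\<forall>i. y i = 1 \<longrightarrow>
        real m1 / sqrt (real (m1 + m2)) * (v \<bullet> x i)
        - \<gamma> * (real m2 / sqrt (real (m1 + m2))) * (u \<bullet> x i) \<ge> 1) \<and>
     (\<forall>i. y i = -1 \<longrightarrow>
        real m2 / sqrt (real (m1 + m2)) * (u \<bullet> x i)
        - \<gamma> * (real m1 / sqrt (real (m1 + m2))) * (v \<bullet> x i) \<ge> 1)"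

definition cvx_global_opt :: "nat \<Rightarrow> nat \<Rightarrow> real \<Rightarrow> ('n \<Rightarrow> real^'d) \<Rightarrow> ('n \<Rightarrow> real) \<Rightarrow>
     real^'d \<Rightarrow> real^'d \<Rightarrow> bool" where
  "cvx_global_opt m1 m2 \<gamma> x y v u \<longleftrightarrow> cvx_feasible m1 m2 \<gamma> x y v u \<and>
     (\<forall>v' u'. cvx_feasible m1 m2 \<gamma> x y v' u' \<longrightarrow> cvx_obj m1 m2 v u \<le> cvx_obj m1 m2 v' u')"

definition zvec :: "nat \<Rightarrow> nat \<Rightarrow> real^'d \<Rightarrow> real^'d \<Rightarrow> real^'d" where
  "zvec m1 m2 v u = (real m1 / sqrt (real (m1 + m2))) *\<^sub>R v
                    - (real m2 / sqrt (real (m1 + m2))) *\<^sub>R u"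

definition minnorm_sep :: "('n \<Rightarrow> real^'d) \<Rightarrow> ('n \<Rightarrow> real) \<Rightarrow> real^'d \<Rightarrow> bool" where
  "minnorm_sep x y zs \<longleftrightarrow> (\<forall>i. y i * (zs \<bullet> x i) \<ge> 1) \<and>
     (\<forall>z. (\<forall>i. y i * (z \<bullet> x i) \<ge> 1) \<longrightarrow> norm zs \<le> norm z)"

end

theory Submission
  imports Defs
begin

lemma dquot:
  fixes F :: "'a::real_inner \<Rightarrow> real"
  assumes "(F has_derivative (\<lambda>h. G \<bullet> h)) (at W)"
  shows "((\<lambda>t. (F (W + t *\<^sub>R E) - F W) / t) \<longlongrightarrow> G \<bullet> E) (at 0)"
proof -
  have p: "((\<lambda>t::real. W + t *\<^sub>R E) has_derivative (\<lambda>t. t *\<^sub>R E)) (at 0)"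
    by (auto intro!: derivative_eq_intros)
  have a2: "(F has_derivative (\<lambda>h. G \<bullet> h)) (at ((\<lambda>t::real. W + t *\<^sub>R E) 0))" using assms by simp
  have "((\<lambda>t. F (W + t *\<^sub>R E)) has_derivative ((\<lambda>h. G \<bullet> h) \<circ> (\<lambda>t. t *\<^sub>R E))) (at 0)"
    using diff_chain_at[OF p a2] by (simp add: o_def)
  moreover have "((\<lambda>h. G \<bullet> h) \<circ> (\<lambda>t. t *\<^sub>R E)) = (*) (G \<bullet> E)" by (auto simp: fun_eq_iff)
  ultimately have "((\<lambda>t. F (W + t *\<^sub>R E)) has_field_derivative (G \<bullet> E)) (at 0)"
    by (simp add: has_field_derivative_def)
  then show ?thesis by (simp add: has_field_derivative_iff)
qed

lemma leaky_nonneg: "0 \<le> a \<Longrightarrow> \<gamma> \<le> 1 \<Longrightarrow> leaky \<gamma> a = a"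
proof -
  assume "0 \<le> a" "\<gamma> \<le> 1"
  then have "\<gamma> * a \<le> 1 * a" by (intro mult_right_mono) auto
  then show ?thesis by (simp add: leaky_def)
qed

lemma leaky_nonpos: "a \<le> 0 \<Longrightarrow> \<gamma> \<le> 1 \<Longrightarrow> leaky \<gamma> a = \<gamma> * a"
proof -
  assume "a \<le> 0" "\<gamma> \<le> 1"
  then have "1 * a \<le> \<gamma> * a" by (intro mult_right_mono_neg) auto
  then show ?thesis by (simp add: leaky_def)
qed

lemma dq_right:
  assumes "b > 0" "a \<ge> 0" "\<gamma> \<le> 1"
  shows "((\<lambda>t. k * (leaky \<gamma> (a + t*b) - leaky \<gamma> a)/t) \<longlongrightarrow> k * b) (at_right 0)"
proof -
  have "eventually (\<lambda>t. k * (leaky \<gamma> (a + t*b) - leaky \<gamma> a)/t = k * b) (at_right 0)"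
  proof (rule eventually_at_rightI[of 0 1])
    fix t :: real assume "t \<in> {0<..<1}"
    then have "t > 0" by simp
    then have "a + t*b \<ge> 0" using assms by simp
    then show "k * (leaky \<gamma> (a + t*b) - leaky \<gamma> a)/t = k * b"
      using assms \<open>t>0\<close> by (simp add: leaky_nonneg)
  qed simp
  then show ?thesis by (rule tendsto_eventually[OF eventually_mono]) simp
qed

lemma dq_left:
  assumes "b > 0" "a \<le> 0" "\<gamma> \<le> 1"
  shows "((\<lambda>t. k * (leaky \<gamma> (a + t*b) - leaky \<gamma> a)/t) \<longlongrightarrow> k * (\<gamma> * b)) (at_left 0)"
proof -
  have "eventually (\<lambda>t. k * (leaky \<gamma> (a + t*b) - leaky \<gamma> a)/t = k * (\<gamma>*b)) (at_left 0)"
  proof (rule eventually_at_leftI[of "-1" 0])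
    fix t :: real assume "t \<in> {-1<..<0}"
    then have "t < 0" by simp
    then have "a + t*b \<le> 0" using assms by (simp add: mult_neg_pos add_nonpos_nonpos less_imp_le)
    then show "k * (leaky \<gamma> (a + t*b) - leaky \<gamma> a)/t = k * (\<gamma>*b)"
      using assms \<open>t<0\<close> by (simp add: leaky_nonpos algebra_simps)
  qed simp
  then show ?thesis by (rule tendsto_eventually[OF eventually_mono]) simp
qed

definition rowok :: "real \<Rightarrow> real \<Rightarrow> real \<Rightarrow> 'a::real_inner \<Rightarrow> 'a \<Rightarrow> bool" where
  "rowok \<kappa> \<gamma> a x r \<longleftrightarrow> (\<forall>z. z \<bullet> x = 0 \<longrightarrow> r \<bullet> z = 0) \<and>
     \<gamma> \<le> r \<bullet> x / (\<kappa> * (x \<bullet> x)) \<and> r \<bullet> x / (\<kappa> * (x \<bullet> x)) \<le> 1 \<and>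
     (a > 0 \<longrightarrow> r \<bullet> x / (\<kappa> * (x \<bullet> x)) = 1) \<and> (a < 0 \<longrightarrow> r \<bullet> x / (\<kappa> * (x \<bullet> x)) = \<gamma>)"

lemma rowok_from_quot:
  fixes x r :: "'a::real_inner"
  assumes q: "\<And>z. ((\<lambda>t. \<kappa> * (leaky \<gamma> (a + t*(z\<bullet>x)) - leaky \<gamma> a)/t) \<longlongrightarrow> r\<bullet>z) (at 0)"
    and k: "\<kappa> \<noteq> 0" and x: "x \<noteq> 0" and g: "0 < \<gamma>" "\<gamma> < 1"
  shows "rowok \<kappa> \<gamma> a x r"
proof -
  have orth: "r \<bullet> z = 0" if "z \<bullet> x = 0" for z
  proof -
    have "((\<lambda>t. \<kappa> * (leaky \<gamma> (a + t*(z\<bullet>x)) - leaky \<gamma> a)/t) \<longlongrightarrow> 0) (at 0)"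
      using that by simp
    from tendsto_unique[OF _ q this] show ?thesis by simp
  qed
  define b where "b = x \<bullet> x"
  have b: "b > 0" using x by (simp add: b_def)
  have kb: "\<kappa> * b \<noteq> 0" using k b by simp
  have R: "r \<bullet> x = \<kappa> * b" if "a \<ge> 0"
  proof -
    have "((\<lambda>t. \<kappa> * (leaky \<gamma> (a + t*b) - leaky \<gamma> a)/t) \<longlongrightarrow> r\<bullet>x) (at_right 0)"
      using tendsto_mono[OF at_le[of "{0<..}"] q[of x]] by (simp add: b_def)
    from tendsto_unique[OF _ this dq_right[OF b that]] g show ?thesis by simp
  qed
  have L: "r \<bullet> x = \<kappa> * (\<gamma> * b)" if "a \<le> 0"
  proof -
    have "((\<lambda>t. \<kappa> * (leaky \<gamma> (a + t*b) - leaky \<gamma> a)/t) \<longlongrightarrow> r\<bullet>x) (at_left 0)"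
      using tendsto_mono[OF at_le[of "{..<0}"] q[of x]] by (simp add: b_def)
    from tendsto_unique[OF _ this dq_left[OF b that]] g show ?thesis by simp
  qed
  have r1: "r \<bullet> x / (\<kappa> * (x \<bullet> x)) = 1" if "a \<ge> 0"
    using R[OF that] kb by (simp add: b_def)
  have r2: "r \<bullet> x / (\<kappa> * (x \<bullet> x)) = \<gamma>" if "a \<le> 0"
    using L[OF that] kb by (simp add: b_def)
  show ?thesis unfolding rowok_def
    using orth r1 r2 g by (cases "a \<ge> 0"; cases "a \<le> 0") auto
qed



lemma card_sum_pos: "0 < real (CARD('m1::finite) + CARD('m2::finite))"
  by (metis add_pos_nonneg of_nat_0_le_iff of_nat_0_less_iff zero_less_card_finite of_nat_add)

lemma c_pos: "0 < 1 / sqrt (real (CARD('m1::finite) + CARD('m2::finite)))"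
  using card_sum_pos by simp

lemma sum_delta_upd:
  fixes f :: "'j::finite \<Rightarrow> real"
  assumes "\<And>j'. f j' = g j' + (if j' = j then d else 0)"
  shows "sum f UNIV = sum g UNIV + d"
  by (simp add: assms sum.distrib)

lemma inner_E1:
  fixes G :: "(real^'d^'m1::finite) \<times> (real^'d^'m2::finite)"
  shows "G \<bullet> ((\<chi> j'. if j' = j then z else 0), 0) = fst G $ j \<bullet> z"
proof -
  have "G \<bullet> ((\<chi> j'. if j' = j then z else 0), 0) = fst G \<bullet> (\<chi> j'. if j' = j then z else 0)"
    by (simp add: inner_Pair_0)
  also have "\<dots> = (\<Sum>j'\<in>UNIV. if j' = j then fst G $ j \<bullet> z else 0)"
    unfolding inner_vec_def by (intro sum.cong) auto
  finally show ?thesis by simp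
qed

lemma inner_E2:
  fixes G :: "(real^'d^'m1::finite) \<times> (real^'d^'m2::finite)"
  shows "G \<bullet> (0, (\<chi> j'. if j' = j then z else 0)) = snd G $ j \<bullet> z"
proof -
  have "G \<bullet> (0, (\<chi> j'. if j' = j then z else 0)) = snd G \<bullet> (\<chi> j'. if j' = j then z else 0)"
    by (simp add: inner_Pair_0)
  also have "\<dots> = (\<Sum>j'\<in>UNIV. if j' = j then snd G $ j \<bullet> z else 0)"
    unfolding inner_vec_def by (intro sum.cong) auto
  finally show ?thesis by simp
qed

lemma net_E1:
  fixes W :: "(real^'d^'m1::finite) \<times> (real^'d^'m2::finite)"
  defines "c \<equiv> 1 / sqrt (real (CARD('m1) + CARD('m2)))"
  shows "net \<gamma> (W + t *\<^sub>R ((\<chi> j'. if j' = j then z else 0), 0)) \<xi> =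
    net \<gamma> W \<xi> + c * (leaky \<gamma> (fst W $ j \<bullet> \<xi> + t * (z \<bullet> \<xi>)) - leaky \<gamma> (fst W $ j \<bullet> \<xi>))"
proof -
  have "(\<Sum>j'\<in>UNIV. c * leaky \<gamma> (fst (W + t *\<^sub>R ((\<chi> j'. if j' = j then z else 0), 0)) $ j' \<bullet> \<xi>))
     = (\<Sum>j'\<in>UNIV. c * leaky \<gamma> (fst W $ j' \<bullet> \<xi>)) + c * (leaky \<gamma> (fst W $ j \<bullet> \<xi> + t * (z \<bullet> \<xi>)) - leaky \<gamma> (fst W $ j \<bullet> \<xi>))"
    by (rule sum_delta_upd) (auto simp: inner_add_left algebra_simps)
  then show ?thesis unfolding net_def c_def by simp
qed

lemma net_E2:
  fixes W :: "(real^'d^'m1::finite) \<times> (real^'d^'m2::finite)"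
  defines "c \<equiv> 1 / sqrt (real (CARD('m1) + CARD('m2)))"
  shows "net \<gamma> (W + t *\<^sub>R (0, (\<chi> j'. if j' = j then z else 0))) \<xi> =
    net \<gamma> W \<xi> - c * (leaky \<gamma> (snd W $ j \<bullet> \<xi> + t * (z \<bullet> \<xi>)) - leaky \<gamma> (snd W $ j \<bullet> \<xi>))"
proof -
  have "(\<Sum>j'\<in>UNIV. c * leaky \<gamma> (snd (W + t *\<^sub>R (0, (\<chi> j'. if j' = j then z else 0))) $ j' \<bullet> \<xi>))
     = (\<Sum>j'\<in>UNIV. c * leaky \<gamma> (snd W $ j' \<bullet> \<xi>)) + c * (leaky \<gamma> (snd W $ j \<bullet> \<xi> + t * (z \<bullet> \<xi>)) - leaky \<gamma> (snd W $ j \<bullet> \<xi>))"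
    by (rule sum_delta_upd) (auto simp: inner_add_left algebra_simps)
  then show ?thesis unfolding net_def c_def by simp
qed

lemma grad_rowok1:
  fixes W G :: "(real^'d^'m1::finite) \<times> (real^'d^'m2::finite)"
  defines "c \<equiv> 1 / sqrt (real (CARD('m1) + CARD('m2)))"
  assumes D: "(P_cons \<gamma> x y i has_derivative (\<lambda>h. G \<bullet> h)) (at W)"
    and y: "y i = 1 \<or> y i = -1" and x: "x i \<noteq> 0" and g: "0 < \<gamma>" "\<gamma> < 1"
  shows "rowok (- y i * c) \<gamma> (fst W $ j \<bullet> x i) (x i) (fst G $ j)"
proof -
  have c: "c \<noteq> 0" unfolding c_def by (rule less_imp_neq[OF c_pos, symmetric])
  have yk: "y i \<noteq> 0" using y by auto
  show ?thesis
  proof (rule rowok_from_quot[OF _ _ x g])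
    fix z
    have "((\<lambda>t. (P_cons \<gamma> x y i (W + t *\<^sub>R ((\<chi> j'. if j' = j then z else 0), 0)) - P_cons \<gamma> x y i W) / t)
       \<longlongrightarrow> G \<bullet> ((\<chi> j'. if j' = j then z else 0), 0)) (at 0)"
      by (rule dquot[OF D])
    then show "((\<lambda>t. - y i * c * (leaky \<gamma> (fst W $ j \<bullet> x i + t * (z \<bullet> x i)) - leaky \<gamma> (fst W $ j \<bullet> x i)) / t)
       \<longlongrightarrow> fst G $ j \<bullet> z) (at 0)"
      unfolding inner_E1 P_cons_def net_E1 c_def by (simp add: algebra_simps)
  qed (use c yk in simp)
qed

lemma grad_rowok2:
  fixes W G :: "(real^'d^'m1::finite) \<times> (real^'d^'m2::finite)"
  defines "c \<equiv> 1 / sqrt (real (CARD('m1) + CARD('m2)))"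
  assumes D: "(P_cons \<gamma> x y i has_derivative (\<lambda>h. G \<bullet> h)) (at W)"
    and y: "y i = 1 \<or> y i = -1" and x: "x i \<noteq> 0" and g: "0 < \<gamma>" "\<gamma> < 1"
  shows "rowok (y i * c) \<gamma> (snd W $ j \<bullet> x i) (x i) (snd G $ j)"
proof -
  have c: "c \<noteq> 0" unfolding c_def by (rule less_imp_neq[OF c_pos, symmetric])
  have yk: "y i \<noteq> 0" using y by auto
  show ?thesis
  proof (rule rowok_from_quot[OF _ _ x g])
    fix z
    have "((\<lambda>t. (P_cons \<gamma> x y i (W + t *\<^sub>R (0, (\<chi> j'. if j' = j then z else 0))) - P_cons \<gamma> x y i W) / t)
       \<longlongrightarrow> G \<bullet> (0, (\<chi> j'. if j' = j then z else 0))) (at 0)"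
      by (rule dquot[OF D])
    then show "((\<lambda>t. y i * c * (leaky \<gamma> (snd W $ j \<bullet> x i + t * (z \<bullet> x i)) - leaky \<gamma> (snd W $ j \<bullet> x i)) / t)
       \<longlongrightarrow> snd G $ j \<bullet> z) (at 0)"
      unfolding inner_E2 P_cons_def net_E2 c_def by (simp add: algebra_simps)
  qed (use c yk in simp)
qed



lemma rowok_lim:
  fixes x w r :: "'a::real_inner"
  assumes ws: "ws \<longlonglongrightarrow> w" and rs: "rs \<longlonglongrightarrow> r" and R: "\<And>k. rowok \<kappa> \<gamma> (ws k \<bullet> x) x (rs k)"
  shows "rowok \<kappa> \<gamma> (w \<bullet> x) x r"
proof -
  have orth: "r \<bullet> z = 0" if "z \<bullet> x = 0" for z
  proof -
    have "(\<lambda>k. rs k \<bullet> z) \<longlonglongrightarrow> r \<bullet> z" by (intro tendsto_intros rs)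
    moreover have "\<And>k. rs k \<bullet> z = 0" using R that unfolding rowok_def by blast
    ultimately show ?thesis using LIMSEQ_unique[OF _ tendsto_const] by simp
  qed
  define K where "K = \<kappa> * (x \<bullet> x)"
  have q: "(\<lambda>k. rs k \<bullet> x / K) \<longlonglongrightarrow> r \<bullet> x / K"
    using tendsto_mult_right[OF tendsto_inner[OF rs tendsto_const], of x "inverse K"] by (simp add: divide_inverse)
  have a: "(\<lambda>k. ws k \<bullet> x) \<longlonglongrightarrow> w \<bullet> x" by (intro tendsto_intros ws)
  have Rlo: "\<And>k. \<gamma> \<le> rs k \<bullet> x / K" and Rhi: "\<And>k. rs k \<bullet> x / K \<le> 1"
    and Rp: "\<And>k. ws k \<bullet> x > 0 \<Longrightarrow> rs k \<bullet> x / K = 1"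
    and Rn: "\<And>k. ws k \<bullet> x < 0 \<Longrightarrow> rs k \<bullet> x / K = \<gamma>"
    using R unfolding rowok_def K_def by blast+
  have lo: "\<gamma> \<le> r \<bullet> x / K"
    by (rule LIMSEQ_le_const[OF q]) (use Rlo in auto)
  have hi: "r \<bullet> x / K \<le> 1"
    by (rule LIMSEQ_le_const2[OF q]) (use Rhi in auto)
  have p: "r \<bullet> x / K = 1" if "w \<bullet> x > 0"
  proof -
    have "eventually (\<lambda>k. ws k \<bullet> x > 0) sequentially" using order_tendstoD(1)[OF a that] .
    then have "eventually (\<lambda>k. rs k \<bullet> x / K = 1) sequentially"
      by (rule eventually_mono) (rule Rp)
    then have "(\<lambda>k. rs k \<bullet> x / K) \<longlonglongrightarrow> 1" by (rule tendsto_eventually)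
    then show ?thesis using LIMSEQ_unique[OF q] by simp
  qed
  have n: "r \<bullet> x / K = \<gamma>" if "w \<bullet> x < 0"
  proof -
    have "eventually (\<lambda>k. ws k \<bullet> x < 0) sequentially" using order_tendstoD(2)[OF a that] .
    then have "eventually (\<lambda>k. rs k \<bullet> x / K = \<gamma>) sequentially"
      by (rule eventually_mono) (rule Rn)
    then have "(\<lambda>k. rs k \<bullet> x / K) \<longlonglongrightarrow> \<gamma>" by (rule tendsto_eventually)
    then show ?thesis using LIMSEQ_unique[OF q] by simp
  qed
  show ?thesis unfolding rowok_def K_def[symmetric] using orth lo hi p n by blast
qed

lemma rowok_convex:
  fixes x r1 r2 :: "'a::real_inner"
  assumes "rowok \<kappa> \<gamma> a x r1" "rowok \<kappa> \<gamma> a x r2" "0 \<le> u" "0 \<le> v" "u + v = 1"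
  shows "rowok \<kappa> \<gamma> a x (u *\<^sub>R r1 + v *\<^sub>R r2)"
proof -
  define K where "K = \<kappa> * (x \<bullet> x)"
  define q1 where "q1 = r1 \<bullet> x / K"
  define q2 where "q2 = r2 \<bullet> x / K"
  have e: "(u *\<^sub>R r1 + v *\<^sub>R r2) \<bullet> x / K = u * q1 + v * q2"
    by (simp add: q1_def q2_def inner_add_left add_divide_distrib)
  have b1: "\<gamma> \<le> q1" "q1 \<le> 1" "a > 0 \<longrightarrow> q1 = 1" "a < 0 \<longrightarrow> q1 = \<gamma>"
    using assms(1) by (auto simp: rowok_def q1_def K_def)
  have b2: "\<gamma> \<le> q2" "q2 \<le> 1" "a > 0 \<longrightarrow> q2 = 1" "a < 0 \<longrightarrow> q2 = \<gamma>"
    using assms(2) by (auto simp: rowok_def q2_def K_def)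
  have l: "u * \<gamma> \<le> u * q1" "v * \<gamma> \<le> v * q2" "u * q1 \<le> u * 1" "v * q2 \<le> v * 1"
    using mult_left_mono[OF b1(1) assms(3)] mult_left_mono[OF b2(1) assms(4)]
      mult_left_mono[OF b1(2) assms(3)] mult_left_mono[OF b2(2) assms(4)] by auto
  have "\<gamma> = u * \<gamma> + v * \<gamma>" using assms(5) by (metis distrib_right mult_1)
  then have "\<gamma> \<le> u * q1 + v * q2" "u * q1 + v * q2 \<le> 1" using l assms(5) by linarith+
  moreover have "a > 0 \<longrightarrow> u * q1 + v * q2 = 1"
    using b1(3) b2(3) assms(5) by simp
  moreover have "a < 0 \<longrightarrow> u * q1 + v * q2 = \<gamma>"
    using b1(4) b2(4) \<open>\<gamma> = u * \<gamma> + v * \<gamma>\<close> by simp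
  moreover have "\<forall>z. z \<bullet> x = 0 \<longrightarrow> (u *\<^sub>R r1 + v *\<^sub>R r2) \<bullet> z = 0"
    using assms(1,2) by (simp add: rowok_def inner_add_left)
  ultimately show ?thesis unfolding rowok_def K_def[symmetric] e by blast
qed

definition SD :: "real \<Rightarrow> ('n \<Rightarrow> real^'d) \<Rightarrow> ('n \<Rightarrow> real) \<Rightarrow> 'n \<Rightarrow>
   (real^'d^'m1::finite) \<times> (real^'d^'m2::finite) \<Rightarrow> ((real^'d^'m1) \<times> (real^'d^'m2)) set" where
  "SD \<gamma> x y i W = {G.
     (\<forall>j. rowok (- y i * (1 / sqrt (real (CARD('m1) + CARD('m2))))) \<gamma> (fst W $ j \<bullet> x i) (x i) (fst G $ j)) \<and>
     (\<forall>j. rowok (y i * (1 / sqrt (real (CARD('m1) + CARD('m2))))) \<gamma> (snd W $ j \<bullet> x i) (x i) (snd G $ j))}"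

lemma SD_convex: "convex (SD \<gamma> x y i W)"
  unfolding convex_def
proof (intro ballI allI impI)
  fix A B and u v :: real
  assume A: "A \<in> SD \<gamma> x y i W" and B: "B \<in> SD \<gamma> x y i W" and uv: "0 \<le> u" "0 \<le> v" "u + v = 1"
  have e1: "fst (u *\<^sub>R A + v *\<^sub>R B) $ j = u *\<^sub>R fst A $ j + v *\<^sub>R fst B $ j" for j by simp
  have e2: "snd (u *\<^sub>R A + v *\<^sub>R B) $ j = u *\<^sub>R snd A $ j + v *\<^sub>R snd B $ j" for j by simp
  show "u *\<^sub>R A + v *\<^sub>R B \<in> SD \<gamma> x y i W"
    using A B unfolding SD_def mem_Collect_eq e1 e2
    using rowok_convex[OF _ _ uv] by blast
qed

lemma clarke_P_cons:
  fixes W :: "(real^'d^'m1::finite) \<times> (real^'d^'m2::finite)"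
  assumes y: "y i = 1 \<or> y i = -1" and x: "x i \<noteq> 0" and g: "0 < \<gamma>" "\<gamma> < 1"
  shows "clarke_subdiff (P_cons \<gamma> x y i) W \<subseteq> SD \<gamma> x y i W"
  unfolding clarke_subdiff_def
proof (rule hull_minimal[of _ _ convex, OF _ SD_convex], safe)
  fix g :: "(real^'d^'m1) \<times> (real^'d^'m2)" and xs gs
  assume xs: "xs \<longlonglongrightarrow> W" and D: "\<forall>k. (P_cons \<gamma> x y i has_derivative (\<bullet>) (gs k)) (at (xs k))"
    and gs: "gs \<longlonglongrightarrow> g"
  have Dk: "\<And>k. (P_cons \<gamma> x y i has_derivative (\<lambda>h. gs k \<bullet> h)) (at (xs k))" using D by simp
  show "g \<in> SD \<gamma> x y i W" unfolding SD_def
  proof (intro CollectI conjI allI)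
    fix j
    show "rowok (- y i * (1 / sqrt (real (CARD('m1) + CARD('m2))))) \<gamma> (fst W $ j \<bullet> x i) (x i) (fst g $ j)"
    proof (rule rowok_lim[where ws="\<lambda>k. fst (xs k) $ j" and rs="\<lambda>k. fst (gs k) $ j"])
      show "(\<lambda>k. fst (xs k) $ j) \<longlonglongrightarrow> fst W $ j" by (intro tendsto_vec_nth tendsto_fst xs)
      show "(\<lambda>k. fst (gs k) $ j) \<longlonglongrightarrow> fst g $ j" by (intro tendsto_vec_nth tendsto_fst gs)
      fix k show "rowok (- y i * (1 / sqrt (real (CARD('m1) + CARD('m2))))) \<gamma> (fst (xs k) $ j \<bullet> x i) (x i) (fst (gs k) $ j)"
        by (rule grad_rowok1[OF Dk y x g])
    qed
  next
    fix j
    show "rowok (y i * (1 / sqrt (real (CARD('m1) + CARD('m2))))) \<gamma> (snd W $ j \<bullet> x i) (x i) (snd g $ j)"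
    proof (rule rowok_lim[where ws="\<lambda>k. snd (xs k) $ j" and rs="\<lambda>k. snd (gs k) $ j"])
      show "(\<lambda>k. snd (xs k) $ j) \<longlonglongrightarrow> snd W $ j" by (intro tendsto_vec_nth tendsto_snd xs)
      show "(\<lambda>k. snd (gs k) $ j) \<longlonglongrightarrow> snd g $ j" by (intro tendsto_vec_nth tendsto_snd gs)
      fix k show "rowok (y i * (1 / sqrt (real (CARD('m1) + CARD('m2))))) \<gamma> (snd (xs k) $ j \<bullet> x i) (x i) (snd (gs k) $ j)"
        by (rule grad_rowok2[OF Dk y x g])
    qed
  qed
qed

lemma clarke_smooth:
  fixes f :: "'a::euclidean_space \<Rightarrow> real"
  assumes D: "\<And>w. (f has_derivative (\<lambda>h. Df w \<bullet> h)) (at w)" and c: "continuous_on UNIV Df"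
  shows "clarke_subdiff f w \<subseteq> {Df w}"
proof -
  have sub: "{g. \<exists>xs gs. xs \<longlonglongrightarrow> w \<and>
                 (\<forall>k. (f has_derivative (\<lambda>h. gs k \<bullet> h)) (at (xs k))) \<and>
                 gs \<longlonglongrightarrow> g} \<subseteq> {Df w}"
  proof
    fix g assume "g \<in> {g. \<exists>xs gs. xs \<longlonglongrightarrow> w \<and>
                 (\<forall>k. (f has_derivative (\<lambda>h. gs k \<bullet> h)) (at (xs k))) \<and>
                 gs \<longlonglongrightarrow> g}"
    then obtain xs gs where xs: "xs \<longlonglongrightarrow> w" and Dk: "\<And>k. (f has_derivative (\<lambda>h. gs k \<bullet> h)) (at (xs k))"
      and gs: "gs \<longlonglongrightarrow> g" by blast
    have gk: "gs k = Df (xs k)" for k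
    proof -
      have "(\<lambda>h. gs k \<bullet> h) = (\<lambda>h. Df (xs k) \<bullet> h)"
        by (rule has_derivative_unique[OF Dk D])
      then have "gs k \<bullet> (gs k - Df (xs k)) = Df (xs k) \<bullet> (gs k - Df (xs k))" by metis
      then have "(gs k - Df (xs k)) \<bullet> (gs k - Df (xs k)) = 0" by (simp add: inner_diff_left)
      then show ?thesis by simp
    qed
    moreover have "(\<lambda>k. Df (xs k)) \<longlonglongrightarrow> Df w"
      by (rule continuous_on_tendsto_compose[OF c xs]) auto
    moreover have "gs = (\<lambda>k. Df (xs k))" using gk by blast
    ultimately have "gs \<longlonglongrightarrow> Df w" by simp
    then show "g \<in> {Df w}" using LIMSEQ_unique[OF gs] by simp
  qed
  show ?thesis unfolding clarke_subdiff_def by (rule hull_minimal[of _ _ convex, OF sub convex_singleton])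
qed

lemma clarke_mem:
  assumes "(f has_derivative (\<lambda>h. G \<bullet> h)) (at w)"
  shows "G \<in> clarke_subdiff f w"
  unfolding clarke_subdiff_def
  apply (rule hull_inc)
  apply (rule CollectI)
  apply (rule exI[of _ "\<lambda>k. w"])
  apply (rule exI[of _ "\<lambda>k. G"])
  using assms by simp



lemma cross_bound:
  fixes x :: "'n::finite \<Rightarrow> 'a::real_inner"
  assumes X: "\<And>i j. i \<noteq> j \<Longrightarrow> \<bar>x i \<bullet> x j\<bar> \<le> D" and B: "\<And>k. \<bar>\<beta> k\<bar> \<le> Bd" and D0: "0 \<le> D"
  shows "\<bar>(\<Sum>k\<in>UNIV. \<beta> k *\<^sub>R x k) \<bullet> x i - \<beta> i * (x i \<bullet> x i)\<bar> \<le> Bd * (real CARD('n) * D)"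
proof -
  have Bd0: "0 \<le> Bd" using B[of i] by linarith
  have "(\<Sum>k\<in>UNIV. \<beta> k *\<^sub>R x k) \<bullet> x i = (\<Sum>k\<in>UNIV. \<beta> k * (x k \<bullet> x i))"
    by (simp add: inner_sum_left)
  also have "\<dots> = \<beta> i * (x i \<bullet> x i) + (\<Sum>k\<in>UNIV - {i}. \<beta> k * (x k \<bullet> x i))"
    by (simp add: sum.remove)
  finally have e: "(\<Sum>k\<in>UNIV. \<beta> k *\<^sub>R x k) \<bullet> x i - \<beta> i * (x i \<bullet> x i) = (\<Sum>k\<in>UNIV - {i}. \<beta> k * (x k \<bullet> x i))"
    by simp
  have "\<bar>\<Sum>k\<in>UNIV - {i}. \<beta> k * (x k \<bullet> x i)\<bar> \<le> (\<Sum>k\<in>UNIV - {i}. \<bar>\<beta> k * (x k \<bullet> x i)\<bar>)"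
    by (rule sum_abs)
  also have "\<dots> \<le> (\<Sum>k\<in>UNIV - {i}. Bd * D)"
  proof (rule sum_mono)
    fix k assume "k \<in> UNIV - {i}"
    then have "\<bar>x k \<bullet> x i\<bar> \<le> D" using X by auto
    then show "\<bar>\<beta> k * (x k \<bullet> x i)\<bar> \<le> Bd * D"
      unfolding abs_mult using B[of k] by (intro mult_mono) auto
  qed
  also have "\<dots> = real (card (UNIV - {i} :: 'n set)) * (Bd * D)" by simp
  also have "\<dots> \<le> real CARD('n) * (Bd * D)"
    by (intro mult_right_mono) (auto simp: card_Diff_subset mult_nonneg_nonneg Bd0 D0)
  finally show ?thesis unfolding e by (simp add: ac_simps)
qed

lemma leaky_F1:
  assumes "yy = 1 \<or> yy = -1" "yy * a > 0" "0 < \<gamma>" "\<gamma> < 1"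
  shows "yy * leaky \<gamma> a \<ge> \<gamma> * (yy * a)"
  using assms
proof (elim disjE)
  assume "yy = 1" then show ?thesis using assms leaky_nonneg[of a \<gamma>]
    by (simp add: mult_left_le_one_le)
next
  assume "yy = -1" then show ?thesis using assms leaky_nonpos[of a \<gamma>] by simp
qed

lemma leaky_F3:
  assumes "yy = 1 \<or> yy = -1" "yy * a > 0" "\<gamma> \<le> 1"
  shows "yy * leaky \<gamma> a = (if yy = 1 then 1 else - \<gamma>) * a"
  using assms leaky_nonneg[of a \<gamma>] leaky_nonpos[of a \<gamma>] by auto

lemma leaky_F2:
  assumes "yy = 1 \<or> yy = -1" "0 < \<gamma>" "\<gamma> < 1"
  shows "yy * leaky \<gamma> a \<le> max (yy * a) 0"
proof (cases "a \<ge> 0")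
  case True
  then show ?thesis using assms leaky_nonneg[of a \<gamma>] by auto
next
  case False
  then have "leaky \<gamma> a = \<gamma> * a" using assms leaky_nonpos[of a \<gamma>] by simp
  moreover have "\<gamma> * a < 0" using False assms by (simp add: mult_pos_neg)
  moreover have "- (\<gamma> * a) \<le> - a" using False assms
    by (metis mult_le_cancel_right1 neg_le_iff_le not_le less_imp_le)
  ultimately show ?thesis using assms by auto
qed

lemma leaky_0: "leaky \<gamma> 0 = 0" by (simp add: leaky_def)

lemma rowok_repr:
  fixes x r :: "'a::real_inner"
  assumes "rowok \<kappa> \<gamma> a x r" "x \<noteq> 0" "\<kappa> \<noteq> 0"
  shows "r = (\<kappa> * (r \<bullet> x / (\<kappa> * (x \<bullet> x)))) *\<^sub>R x"
proof -
  define z where "z = r - (r \<bullet> x / (x \<bullet> x)) *\<^sub>R x"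
  have xx: "x \<bullet> x \<noteq> 0" using assms by simp
  have "z \<bullet> x = 0" unfolding z_def using xx by (simp add: inner_diff_left)
  then have "r \<bullet> z = 0" using assms(1) unfolding rowok_def by blast
  then have "z \<bullet> z = 0" using \<open>z \<bullet> x = 0\<close> unfolding z_def
    by (simp add: inner_diff_left inner_diff_right inner_commute)
  then have "r = (r \<bullet> x / (x \<bullet> x)) *\<^sub>R x" unfolding z_def by simp
  also have "r \<bullet> x / (x \<bullet> x) = \<kappa> * (r \<bullet> x / (\<kappa> * (x \<bullet> x)))" using assms(3) by simp
  finally show ?thesis .
qed



definition rowrep :: "real \<Rightarrow> real \<Rightarrow> ('n::finite \<Rightarrow> real) \<Rightarrow> ('n \<Rightarrow> real) \<Rightarrow> ('n \<Rightarrow> 'a::real_inner) \<Rightarrow> 'a \<Rightarrow> bool" where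
  "rowrep c \<gamma> lam yy x w \<longleftrightarrow> (\<exists>s. w = c *\<^sub>R (\<Sum>i\<in>UNIV. (lam i * yy i * s i) *\<^sub>R x i) \<and>
     (\<forall>i. \<gamma> \<le> s i \<and> s i \<le> 1 \<and> (w \<bullet> x i > 0 \<longrightarrow> s i = 1) \<and> (w \<bullet> x i < 0 \<longrightarrow> s i = \<gamma>)))"

lemma row_bounds:
  fixes x :: "'n::finite \<Rightarrow> 'a::real_inner"
  assumes R: "rowrep c \<gamma> lam yy x w" and c: "c > 0" and g: "0 < \<gamma>" "\<gamma> < 1"
    and yy: "\<And>i. yy i = 1 \<or> yy i = -1" and lam: "\<And>i. 0 \<le> lam i" "\<And>i. lam i \<le> \<Lambda>"
    and X: "\<And>i j. i \<noteq> j \<Longrightarrow> \<bar>x i \<bullet> x j\<bar> \<le> D" and D0: "0 \<le> D"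
    and N: "\<And>i. Rn \<le> norm (x i)" "\<And>i. norm (x i) \<le> Rx" and Rn: "0 \<le> Rn"
  shows "yy k * (w \<bullet> x k) \<ge> c * (lam k * \<gamma> * Rn^2 - \<Lambda> * (real CARD('n) * D))"
    and "yy k * (w \<bullet> x k) \<le> c * (lam k * Rx^2 + \<Lambda> * (real CARD('n) * D))"
proof -
  obtain s where w: "w = c *\<^sub>R (\<Sum>i\<in>UNIV. (lam i * yy i * s i) *\<^sub>R x i)"
    and s: "\<And>i. \<gamma> \<le> s i \<and> s i \<le> 1" using R unfolding rowrep_def by blast
  define \<beta> where "\<beta> i = lam i * yy i * s i" for i
  have yy2: "yy i * yy i = 1" for i using yy[of i] by auto
  have absb: "\<bar>\<beta> i\<bar> \<le> \<Lambda>" for i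
  proof -
    have "\<bar>\<beta> i\<bar> = lam i * s i" unfolding \<beta>_def using yy[of i] lam(1)[of i] s[of i] g
      by (auto simp: abs_mult)
    also have "\<dots> \<le> lam i * 1" using s[of i] lam(1)[of i] by (intro mult_left_mono) auto
    finally show ?thesis using lam(2)[of i] by simp
  qed
  define S where "S = (\<Sum>i\<in>UNIV. \<beta> i *\<^sub>R x i)"
  have cb: "\<bar>S \<bullet> x k - \<beta> k * (x k \<bullet> x k)\<bar> \<le> \<Lambda> * (real CARD('n) * D)"
    unfolding S_def by (rule cross_bound[OF X absb D0])
  define e where "e = S \<bullet> x k - \<beta> k * (x k \<bullet> x k)"
  define q where "q = x k \<bullet> x k"
  have q: "Rn^2 \<le> q" "q \<le> Rx^2" unfolding q_def power2_norm_eq_inner[symmetric]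
    using N[of k] Rn by (auto intro: power_mono)
  have wx: "yy k * (w \<bullet> x k) = c * (lam k * s k * q + yy k * e)"
  proof -
    have "w \<bullet> x k = c * (S \<bullet> x k)" unfolding w S_def \<beta>_def by simp
    also have "S \<bullet> x k = \<beta> k * q + e" unfolding e_def q_def by simp
    finally have "yy k * (w \<bullet> x k) = c * (yy k * \<beta> k * q + yy k * e)" by (simp add: algebra_simps)
    also have "yy k * \<beta> k = lam k * s k" unfolding \<beta>_def using yy2[of k]
      by (metis mult.assoc mult.commute mult.right_neutral)
    finally show ?thesis .
  qed
  have ye: "\<bar>yy k * e\<bar> \<le> \<Lambda> * (real CARD('n) * D)" using cb yy[of k] unfolding e_def by (auto simp: abs_mult)
  have lo: "lam k * \<gamma> * Rn^2 \<le> lam k * s k * q"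
    using s[of k] q lam(1)[of k] g by (intro mult_mono mult_left_mono) auto
  have hi: "lam k * s k * q \<le> lam k * Rx^2"
  proof -
    have "lam k * s k * q \<le> lam k * 1 * q" using s[of k] lam(1)[of k] q Rn
      by (intro mult_right_mono mult_left_mono) (auto intro: order_trans[OF zero_le_power2])
    also have "\<dots> \<le> lam k * Rx^2" using q lam(1)[of k] by (simp add: mult_left_mono)
    finally show ?thesis .
  qed
  show "yy k * (w \<bullet> x k) \<ge> c * (lam k * \<gamma> * Rn^2 - \<Lambda> * (real CARD('n) * D))"
    unfolding wx using lo ye c by (intro mult_left_mono) auto
  show "yy k * (w \<bullet> x k) \<le> c * (lam k * Rx^2 + \<Lambda> * (real CARD('n) * D))"
    unfolding wx using hi ye c by (intro mult_left_mono) auto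
qed

lemma data_facts:
  fixes x :: "'n::finite \<Rightarrow> real^'d"
  assumes H: "data_hyp \<gamma> x y" and g: "0 < \<gamma>"
  shows "0 < Rmin x" "\<And>i. Rmin x \<le> norm (x i)" "\<And>i. norm (x i) \<le> Rmax x" "Rmin x \<le> Rmax x"
    "\<And>i j. i \<noteq> j \<Longrightarrow> \<bar>x i \<bullet> x j\<bar> \<le> \<gamma>^3 * Rmin x^4 / (3 * Rmax x^2 * real CARD('n))"
    "\<And>i. y i = 1 \<or> y i = -1" "\<And>i. x i \<noteq> 0"
proof -
  have fin: "finite (range (\<lambda>i. norm (x i)))" by simp
  show le1: "\<And>i. Rmin x \<le> norm (x i)" unfolding Rmin_def by (rule Min_le[OF fin]) simp
  show le2: "\<And>i. norm (x i) \<le> Rmax x" unfolding Rmax_def by (rule Max_ge[OF fin]) simp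
  show xn: "\<And>i. x i \<noteq> 0" and yl: "\<And>i. y i = 1 \<or> y i = -1" using H unfolding data_hyp_def by auto
  have "Rmin x \<in> range (\<lambda>i. norm (x i))" unfolding Rmin_def by (rule Min_in[OF fin]) simp
  then show pos: "0 < Rmin x" using xn by auto
  show "Rmin x \<le> Rmax x" using le1 le2 by (meson order_trans)
  fix i j :: 'n assume ij: "i \<noteq> j"
  have h: "(Rmin x)^2 \<ge> 3 * (1 / \<gamma>^3) * (Rmax x / Rmin x)^2 * real CARD('n) * \<bar>x i \<bullet> x j\<bar>"
    using H ij unfolding data_hyp_def by blast
  have Rx: "Rmax x > 0" using pos le1 le2 by (meson less_le_trans)
  have n: "real CARD('n) > 0" by simp
  define A where "A = 3 * Rmax x^2 * real CARD('n)"
  have A: "A > 0" unfolding A_def using Rx n by simp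
  have "3 * (1 / \<gamma>^3) * (Rmax x / Rmin x)^2 * real CARD('n) * \<bar>x i \<bullet> x j\<bar>
        = A * \<bar>x i \<bullet> x j\<bar> / (\<gamma>^3 * Rmin x^2)"
    unfolding A_def using pos g by (simp add: field_simps power2_eq_square)
  with h have "A * \<bar>x i \<bullet> x j\<bar> / (\<gamma>^3 * Rmin x^2) \<le> Rmin x^2" by simp
  then have "A * \<bar>x i \<bullet> x j\<bar> \<le> Rmin x^2 * (\<gamma>^3 * Rmin x^2)"
    using pos g by (simp add: divide_le_eq)
  then have "\<bar>x i \<bullet> x j\<bar> \<le> Rmin x^2 * (\<gamma>^3 * Rmin x^2) / A"
    using A by (simp add: le_divide_eq mult.commute)
  then show "\<bar>x i \<bullet> x j\<bar> \<le> \<gamma>^3 * Rmin x^4 / (3 * Rmax x^2 * real CARD('n))"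
    unfolding A_def by (simp add: power4_eq_xxxx mult_ac power2_eq_square)
qed



lemma P_obj_deriv: "(P_obj has_derivative (\<lambda>h. w \<bullet> h)) (at w)"
  unfolding P_obj_def power2_norm_eq_inner
  by (auto intro!: derivative_eq_intros simp: inner_commute)

lemma kkt_unpack:
  fixes W :: "(real^'d^'m1::finite) \<times> (real^'d^'m2::finite)" and x :: "'n::finite \<Rightarrow> real^'d"
  defines "c \<equiv> 1 / sqrt (real (CARD('m1) + CARD('m2)))"
  assumes K: "kkt_point P_obj (P_cons \<gamma> x y) W" and y: "\<And>i. y i = 1 \<or> y i = -1"
    and xn: "\<And>i. x i \<noteq> 0" and g: "0 < \<gamma>" "\<gamma> < 1"
  shows "\<exists>lam. (\<forall>i. 0 \<le> lam i) \<and> (\<forall>i. lam i * (1 - y i * net \<gamma> W (x i)) = 0) \<and>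
     (\<forall>i. 1 \<le> y i * net \<gamma> W (x i)) \<and> (\<forall>j. rowrep c \<gamma> lam y x (fst W $ j)) \<and>
     (\<forall>j. rowrep c \<gamma> lam (\<lambda>i. - y i) x (snd W $ j))"
proof -
  have c: "c > 0" unfolding c_def by (rule c_pos)
  from K obtain lam a b where feas: "\<forall>i. P_cons \<gamma> x y i W \<le> 0" and lam: "\<forall>i. 0 \<le> lam i"
    and cs: "\<forall>i. lam i * P_cons \<gamma> x y i W = 0"
    and a: "a \<in> clarke_subdiff P_obj W" and b: "\<forall>i. b i \<in> clarke_subdiff (P_cons \<gamma> x y i) W"
    and z: "0 = a + (\<Sum>i\<in>UNIV. lam i *\<^sub>R b i)"
    unfolding kkt_point_def by blast
  have "clarke_subdiff P_obj W \<subseteq> {id W}"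
    by (rule clarke_smooth) (auto simp: P_obj_deriv continuous_on_id)
  then have "a = W" using a by auto
  then have Wb: "W = - (\<Sum>i\<in>UNIV. lam i *\<^sub>R b i)" using z by (simp add: eq_neg_iff_add_eq_0)
  have bSD: "b i \<in> SD \<gamma> x y i W" for i using clarke_P_cons[of y i x, OF y[of i] xn[of i] g] b by blast
  define s1 where "s1 j i = fst (b i) $ j \<bullet> x i / ((- y i * c) * (x i \<bullet> x i))" for j i
  define s2 where "s2 j i = snd (b i) $ j \<bullet> x i / ((y i * c) * (x i \<bullet> x i))" for j i
  have yc: "y i * c \<noteq> 0" for i using y[of i] c by auto
  have R1: "rowok (- y i * c) \<gamma> (fst W $ j \<bullet> x i) (x i) (fst (b i) $ j)" for i j
    using bSD[of i] unfolding SD_def c_def by blast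
  have R2: "rowok (y i * c) \<gamma> (snd W $ j \<bullet> x i) (x i) (snd (b i) $ j)" for i j
    using bSD[of i] unfolding SD_def c_def by blast
  have rep1: "fst (b i) $ j = ((- y i * c) * s1 j i) *\<^sub>R x i" for i j
    unfolding s1_def by (rule rowok_repr[OF R1 xn]) (use yc[of i] in simp)
  have rep2: "snd (b i) $ j = ((y i * c) * s2 j i) *\<^sub>R x i" for i j
    unfolding s2_def by (rule rowok_repr[OF R2 xn yc])
  have row1: "rowrep c \<gamma> lam y x (fst W $ j)" for j
    unfolding rowrep_def
  proof (intro exI conjI allI)
    have "fst W $ j = - (\<Sum>i\<in>UNIV. lam i *\<^sub>R fst (b i) $ j)"
      by (subst Wb) (simp add: fst_sum)
    also have "\<dots> = c *\<^sub>R (\<Sum>i\<in>UNIV. (lam i * y i * s1 j i) *\<^sub>R x i)"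
      unfolding rep1 by (simp add: scaleR_sum_right sum_negf[symmetric] algebra_simps)
    finally show "fst W $ j = c *\<^sub>R (\<Sum>i\<in>UNIV. (lam i * y i * s1 j i) *\<^sub>R x i)" .
  next
    fix i
    show "\<gamma> \<le> s1 j i" "s1 j i \<le> 1" "0 < fst W $ j \<bullet> x i \<longrightarrow> s1 j i = 1"
      "fst W $ j \<bullet> x i < 0 \<longrightarrow> s1 j i = \<gamma>"
      using R1[of i j] unfolding rowok_def s1_def by auto
  qed
  have row2: "rowrep c \<gamma> lam (\<lambda>i. - y i) x (snd W $ j)" for j
    unfolding rowrep_def
  proof (intro exI conjI allI)
    have "snd W $ j = - (\<Sum>i\<in>UNIV. lam i *\<^sub>R snd (b i) $ j)"
      by (subst Wb) (simp add: snd_sum)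
    also have "\<dots> = c *\<^sub>R (\<Sum>i\<in>UNIV. (lam i * - y i * s2 j i) *\<^sub>R x i)"
      unfolding rep2 by (simp add: scaleR_sum_right sum_negf[symmetric] algebra_simps)
    finally show "snd W $ j = c *\<^sub>R (\<Sum>i\<in>UNIV. (lam i * - y i * s2 j i) *\<^sub>R x i)" .
  next
    fix i
    show "\<gamma> \<le> s2 j i" "s2 j i \<le> 1" "0 < snd W $ j \<bullet> x i \<longrightarrow> s2 j i = 1"
      "snd W $ j \<bullet> x i < 0 \<longrightarrow> s2 j i = \<gamma>"
      using R2[of i j] unfolding rowok_def s2_def by auto
  qed
  show ?thesis
    using lam cs feas row1 row2 unfolding P_cons_def by (intro exI[of _ lam]) auto
qed



lemma net_rows:
  fixes W :: "(real^'d^'m1::finite) \<times> (real^'d^'m2::finite)"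
  defines "c \<equiv> 1 / sqrt (real (CARD('m1) + CARD('m2)))"
  shows "yk * net \<gamma> W \<xi> = c * (\<Sum>j\<in>UNIV. yk * leaky \<gamma> (fst W $ j \<bullet> \<xi>))
            + c * (\<Sum>j\<in>UNIV. (- yk) * leaky \<gamma> (snd W $ j \<bullet> \<xi>))"
  unfolding net_def c_def by (simp add: sum_distrib_left algebra_simps sum_negf)

lemma c_sq:
  "(1 / sqrt (real (CARD('m1::finite) + CARD('m2::finite))))^2 * (real CARD('m1) + real CARD('m2)) = 1"
proof -
  have "0 < real (CARD('m1) + CARD('m2))" by (rule card_sum_pos)
  then show ?thesis by (simp add: power_divide)
qed

lemma sum_lower:
  fixes f :: "'j::finite \<Rightarrow> real"
  assumes "\<And>j. f j \<ge> b" shows "(\<Sum>j\<in>UNIV. f j) \<ge> real CARD('j) * b"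
proof -
  have "(\<Sum>j\<in>UNIV. f j) \<ge> (\<Sum>j\<in>(UNIV::'j set). b)" by (rule sum_mono) (rule assms)
  then show ?thesis by simp
qed

lemma sum_upper:
  fixes f :: "'j::finite \<Rightarrow> real"
  assumes "\<And>j. f j \<le> b" shows "(\<Sum>j\<in>UNIV. f j) \<le> real CARD('j) * b"
proof -
  have "(\<Sum>j\<in>UNIV. f j) \<le> (\<Sum>j\<in>(UNIV::'j set). b)" by (rule sum_mono) (rule assms)
  then show ?thesis by simp
qed

lemma num1:
  fixes \<gamma> Rn Rx :: real
  assumes "0<\<gamma>" "\<gamma><1" "0<Rn" "Rn \<le> Rx"
  shows "\<gamma>^3*Rn^4/(3*Rx^2) < \<gamma>*Rn^2/3"
proof -
  have Rx: "0 < Rx" using assms by linarith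
  have "Rn^2 \<le> Rx^2" using assms by (intro power_mono) auto
  then have "Rn^2 * Rn^2 \<le> Rn^2 * Rx^2" by (intro mult_left_mono) auto
  then have "Rn^4 \<le> Rn^2 * Rx^2" by (simp add: power4_eq_xxxx power2_eq_square mult.assoc)
  then have a: "Rn^4 / Rx^2 \<le> Rn^2" using Rx by (simp add: divide_le_eq)
  have "\<gamma>*\<gamma> < 1*1" using assms by (intro mult_strict_mono) auto
  then have "\<gamma>*(\<gamma>*\<gamma>) < \<gamma>*1" using assms by (intro mult_strict_left_mono) auto
  then have "\<gamma>^3 < \<gamma>" by (simp add: power3_eq_cube)
  have "\<gamma>^3*Rn^4/(3*Rx^2) = (\<gamma>^3/3) * (Rn^4/Rx^2)" by simp
  also have "\<dots> \<le> (\<gamma>^3/3) * Rn^2" using a assms by (intro mult_left_mono) auto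
  also have "\<dots> < (\<gamma>/3) * Rn^2" using \<open>\<gamma>^3 < \<gamma>\<close> assms by (intro mult_strict_right_mono) auto
  finally show ?thesis by simp
qed

lemma num2:
  fixes \<gamma> Rn L E :: real
  assumes "0<\<gamma>" "0<Rn" "0 < L" "1 \<ge> \<gamma> * L * (\<gamma> * Rn^2 - E)" "E < \<gamma>*Rn^2/3"
  shows "L < 3 / (2 * \<gamma>^2 * Rn^2)"
proof -
  have "\<gamma> * Rn^2 - E > 2/3 * (\<gamma> * Rn^2)" using assms by simp
  then have "\<gamma> * L * (\<gamma> * Rn^2 - E) > \<gamma> * L * (2/3 * (\<gamma> * Rn^2))"
    using assms by (intro mult_strict_left_mono) auto
  then have "(2 * \<gamma>^2 * Rn^2) * L < 3" using assms(4) by (simp add: power2_eq_square algebra_simps)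
  then show ?thesis using assms by (simp add: less_divide_eq mult.commute)
qed

lemma num3:
  fixes \<gamma> Rn Rx L :: real
  assumes "0<\<gamma>" "0<Rn" "Rn \<le> Rx" "0 \<le> L" "L < 3 / (2 * \<gamma>^2 * Rn^2)"
  shows "L * (\<gamma>^3*Rn^4/(3*Rx^2)) < \<gamma>*Rn^2/(2*Rx^2)"
proof -
  have Rx: "0 < Rx" using assms by linarith
  have E: "\<gamma>^3*Rn^4/(3*Rx^2) > 0" using assms Rx by simp
  have "L * (\<gamma>^3*Rn^4/(3*Rx^2)) < 3 / (2 * \<gamma>^2 * Rn^2) * (\<gamma>^3*Rn^4/(3*Rx^2))"
    using assms E by (intro mult_strict_right_mono) auto
  also have "\<dots> = \<gamma>*Rn^2/(2*Rx^2)" using assms Rx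
    by (simp add: field_simps power2_eq_square power3_eq_cube power4_eq_xxxx)
  finally show ?thesis .
qed

lemma num4:
  fixes \<gamma> Rn Rx :: real
  assumes "0<\<gamma>" "\<gamma> < 1" "0<Rn" "Rn \<le> Rx"
  shows "\<gamma>*Rn^2/(2*Rx^2) < 1/2"
proof -
  have Rx: "0 < Rx" using assms by linarith
  have "Rn^2 \<le> Rx^2" using assms by (intro power_mono) auto
  moreover have "\<gamma>*Rn^2 < 1 * Rn^2" using assms by (intro mult_strict_right_mono) auto
  ultimately have "\<gamma>*Rn^2 < 1 * Rx^2" by linarith
  then show ?thesis using Rx by (simp add: divide_less_eq)
qed
lemma rowrep_zero:
  assumes "rowrep c \<gamma> lam yy x w" "\<And>i. lam i = 0" shows "w = 0"
  using assms unfolding rowrep_def by auto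

lemma analysis:
  fixes W :: "(real^'d^'m1::finite) \<times> (real^'d^'m2::finite)" and x :: "'n::finite \<Rightarrow> real^'d"
  defines "c \<equiv> 1 / sqrt (real (CARD('m1) + CARD('m2)))"
  assumes H: "data_hyp \<gamma> x y" and g: "0 < \<gamma>" "\<gamma> < 1"
    and lam0: "\<And>i. 0 \<le> lam i" and cs: "\<And>i. lam i * (1 - y i * net \<gamma> W (x i)) = 0"
    and feas: "\<And>i. 1 \<le> y i * net \<gamma> W (x i)"
    and r1: "\<And>j. rowrep c \<gamma> lam y x (fst W $ j)"
    and r2: "\<And>j. rowrep c \<gamma> lam (\<lambda>i. - y i) x (snd W $ j)"
  shows "\<And>i. 1/(2*Rmax x^2) < lam i" "\<And>i. lam i < 3/(2*\<gamma>^2*Rmin x^2)"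
    "\<And>i j. y i * (fst W $ j \<bullet> x i) > 0" "\<And>i j. - y i * (snd W $ j \<bullet> x i) > 0"
proof -
  define Rn where "Rn = Rmin x"
  define Rx where "Rx = Rmax x"
  have Rn: "0 < Rn" and N: "\<And>i. Rn \<le> norm (x i)" "\<And>i. norm (x i) \<le> Rx" and RnRx: "Rn \<le> Rx"
    and y: "\<And>i. y i = 1 \<or> y i = -1"
    using data_facts[OF H g(1)] unfolding Rn_def Rx_def by auto
  have Rx: "0 < Rx" using Rn RnRx by linarith
  define D where "D = \<gamma>^3 * Rn^4 / (3 * Rx^2 * real CARD('n))"
  define E where "E = \<gamma>^3 * Rn^4 / (3 * Rx^2)"
  have X: "\<And>i j. i \<noteq> j \<Longrightarrow> \<bar>x i \<bullet> x j\<bar> \<le> D"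
    using data_facts(5)[OF H g(1)] unfolding D_def Rn_def Rx_def by auto
  have D0: "0 \<le> D" unfolding D_def using g by simp
  have nD: "real CARD('n) * D = E" unfolding D_def E_def by simp
  have E0: "0 \<le> E" unfolding E_def using g by simp
  have yn: "\<And>i. - y i = 1 \<or> - y i = -1" using y by (metis minus_minus)
  have c: "c > 0" unfolding c_def by (rule c_pos)
  have csq: "c^2 * (real CARD('m1) + real CARD('m2)) = 1" unfolding c_def by (rule c_sq)
  define L where "L = Max (range lam)"
  have lamL: "\<And>i. lam i \<le> L" unfolding L_def by (rule Max_ge) auto
  have L0: "0 \<le> L" using lamL[of undefined] lam0[of undefined] by linarith
  have B1: "\<And>k j. y k * (fst W $ j \<bullet> x k) \<ge> c * (lam k * \<gamma> * Rn^2 - L * E)"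
    "\<And>k j. y k * (fst W $ j \<bullet> x k) \<le> c * (lam k * Rx^2 + L * E)"
    using row_bounds[OF r1 c g y lam0 lamL X D0 N Rn[THEN less_imp_le]] unfolding nD by auto
  have B2: "\<And>k j. - y k * (snd W $ j \<bullet> x k) \<ge> c * (lam k * \<gamma> * Rn^2 - L * E)"
    "\<And>k j. - y k * (snd W $ j \<bullet> x k) \<le> c * (lam k * Rx^2 + L * E)"
    using row_bounds[OF r2 c g yn lam0 lamL X D0 N Rn[THEN less_imp_le]] unfolding nD by auto
  have Lpos: "L > 0"
  proof (rule ccontr)
    assume "\<not> L > 0"
    then have z: "\<And>i. lam i = 0" using lamL lam0 by (meson antisym not_less order_trans)
    have "fst W $ j = 0" for j using rowrep_zero[OF r1 z] .
    moreover have "snd W $ j = 0" for j using rowrep_zero[OF r2 z] .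
    ultimately have "net \<gamma> W \<xi> = 0" for \<xi> unfolding net_def by (simp add: leaky_0)
    then show False using feas[of undefined] by simp
  qed
  have "L \<in> range lam" unfolding L_def by (rule Max_in) auto
  then obtain k0 where k0: "lam k0 = L" by auto
  have tight: "y k0 * net \<gamma> W (x k0) = 1" using cs[of k0] k0 Lpos by simp
  have E3: "E < \<gamma>*Rn^2/3" using num1[OF g Rn RnRx] unfolding E_def .
  have "\<gamma>*Rn^2 > 0" using g Rn by simp
  then have gE: "\<gamma> * Rn^2 - E > 0" using E3 by linarith
  define b where "b = \<gamma> * (c * (L * (\<gamma> * Rn^2 - E)))"
  have p: "c * (L * (\<gamma> * Rn^2 - E)) > 0" using c Lpos gE by simp
  have e: "c * (lam k0 * \<gamma> * Rn^2 - L * E) = c * (L * (\<gamma> * Rn^2 - E))" using k0 by (simp add: algebra_simps)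
  have lowb1: "y k0 * leaky \<gamma> (fst W $ j \<bullet> x k0) \<ge> b" for j
  proof -
    have a1: "y k0 * (fst W $ j \<bullet> x k0) \<ge> c * (L * (\<gamma> * Rn^2 - E))" using B1(1)[of k0 j] e by simp
    show ?thesis
      using leaky_F1[OF y[of k0] _ g, of "fst W $ j \<bullet> x k0"] a1 p g unfolding b_def
      by (smt (verit) mult_left_mono)
  qed
  have lowb2: "- y k0 * leaky \<gamma> (snd W $ j \<bullet> x k0) \<ge> b" for j
  proof -
    have a2: "- y k0 * (snd W $ j \<bullet> x k0) \<ge> c * (L * (\<gamma> * Rn^2 - E))" using B2(1)[of k0 j] e by simp
    show ?thesis
      using leaky_F1[OF yn[of k0] _ g, of "snd W $ j \<bullet> x k0"] a2 p g unfolding b_def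
      by (smt (verit) mult_left_mono)
  qed
  have S1: "(\<Sum>j\<in>UNIV. y k0 * leaky \<gamma> (fst W $ j \<bullet> x k0)) \<ge> real CARD('m1) * b"
    by (rule sum_lower) (rule lowb1)
  have S2: "(\<Sum>j\<in>UNIV. - y k0 * leaky \<gamma> (snd W $ j \<bullet> x k0)) \<ge> real CARD('m2) * b"
    by (rule sum_lower) (rule lowb2)
  have nr: "y k0 * net \<gamma> W (x k0) = c * (\<Sum>j\<in>UNIV. y k0 * leaky \<gamma> (fst W $ j \<bullet> x k0))
            + c * (\<Sum>j\<in>UNIV. - y k0 * leaky \<gamma> (snd W $ j \<bullet> x k0))"
    unfolding c_def by (rule net_rows)
  have "c * (real CARD('m1) * b) \<le> c * (\<Sum>j\<in>UNIV. y k0 * leaky \<gamma> (fst W $ j \<bullet> x k0))"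
    using S1 c by (intro mult_left_mono) auto
  moreover have "c * (real CARD('m2) * b) \<le> c * (\<Sum>j\<in>UNIV. - y k0 * leaky \<gamma> (snd W $ j \<bullet> x k0))"
    using S2 c by (intro mult_left_mono) auto
  ultimately have "1 \<ge> c * (real CARD('m1) * b) + c * (real CARD('m2) * b)"
    using nr tight by linarith
  also have "c * (real CARD('m1) * b) + c * (real CARD('m2) * b) = \<gamma> * L * (\<gamma> * Rn^2 - E) * (c^2 * (real CARD('m1) + real CARD('m2)))"
    unfolding b_def by (simp add: algebra_simps power2_eq_square)
  finally have "1 \<ge> \<gamma> * L * (\<gamma> * Rn^2 - E)" using csq by simp
  then have Lb: "L < 3 / (2 * \<gamma>^2 * Rn^2)"
    using num2[OF g(1) Rn Lpos] num1[OF g Rn RnRx] unfolding E_def by simp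
  have LE: "L * E < \<gamma>*Rn^2/(2*Rx^2)" using num3[OF g(1) Rn RnRx L0 Lb] unfolding E_def .
  have T: "\<gamma>*Rn^2/(2*Rx^2) < 1/2" using num4[OF g Rn RnRx] .
  have lower: "1/(2*Rx^2) < lam k" for k
  proof -
    define ub where "ub = c * (lam k * Rx^2 + L * E)"
    have ub0: "0 \<le> ub" unfolding ub_def using c lam0[of k] L0 E0 by simp
    have u1: "y k * leaky \<gamma> (fst W $ j \<bullet> x k) \<le> ub" for j
      using leaky_F2[OF y[of k] g, of "fst W $ j \<bullet> x k"] B1(2)[of k j] ub0 unfolding ub_def by linarith
    have u2: "- y k * leaky \<gamma> (snd W $ j \<bullet> x k) \<le> ub" for j
      using leaky_F2[OF yn[of k] g, of "snd W $ j \<bullet> x k"] B2(2)[of k j] ub0 unfolding ub_def by linarith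
    have S1: "(\<Sum>j\<in>UNIV. y k * leaky \<gamma> (fst W $ j \<bullet> x k)) \<le> real CARD('m1) * ub"
      by (rule sum_upper) (rule u1)
    have S2: "(\<Sum>j\<in>UNIV. - y k * leaky \<gamma> (snd W $ j \<bullet> x k)) \<le> real CARD('m2) * ub"
      by (rule sum_upper) (rule u2)
    have nr: "y k * net \<gamma> W (x k) = c * (\<Sum>j\<in>UNIV. y k * leaky \<gamma> (fst W $ j \<bullet> x k))
            + c * (\<Sum>j\<in>UNIV. - y k * leaky \<gamma> (snd W $ j \<bullet> x k))"
      unfolding c_def by (rule net_rows)
    have "c * (\<Sum>j\<in>UNIV. y k * leaky \<gamma> (fst W $ j \<bullet> x k)) \<le> c * (real CARD('m1) * ub)"
      using S1 c by (intro mult_left_mono) auto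
    moreover have "c * (\<Sum>j\<in>UNIV. - y k * leaky \<gamma> (snd W $ j \<bullet> x k)) \<le> c * (real CARD('m2) * ub)"
      using S2 c by (intro mult_left_mono) auto
    ultimately have "1 \<le> c * (real CARD('m1) * ub) + c * (real CARD('m2) * ub)"
      using nr feas[of k] by linarith
    also have "c * (real CARD('m1) * ub) + c * (real CARD('m2) * ub) = (lam k * Rx^2 + L * E) * (c^2 * (real CARD('m1) + real CARD('m2)))"
      unfolding ub_def by (simp add: algebra_simps power2_eq_square)
    finally have "1 \<le> lam k * Rx^2 + L * E" using csq by simp
    then have "lam k * Rx^2 > 1/2" using LE T by linarith
    then show ?thesis using Rx by (simp add: divide_less_eq mult.commute)
  qed
  have Tk: "\<gamma>*Rn^2/(2*Rx^2) < lam k * \<gamma> * Rn^2" for k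
  proof -
    have "1/(2*Rx^2) * (\<gamma>*Rn^2) < lam k * (\<gamma>*Rn^2)"
      using lower[of k] g Rn by (intro mult_strict_right_mono) auto
    then show ?thesis by (simp add: mult.assoc)
  qed
  show "\<And>i. 1/(2*Rmax x^2) < lam i" using lower unfolding Rx_def .
  show "\<And>i. lam i < 3/(2*\<gamma>^2*Rmin x^2)" using Lb lamL unfolding Rn_def by (meson le_less_trans)
  show "\<And>i j. y i * (fst W $ j \<bullet> x i) > 0"
  proof -
    fix i j
    have "lam i * \<gamma> * Rn^2 - L * E > 0" using Tk[of i] LE by linarith
    then show "y i * (fst W $ j \<bullet> x i) > 0" using B1(1)[of i j] c by (smt (verit) mult_pos_pos)
  qed
  show "\<And>i j. - y i * (snd W $ j \<bullet> x i) > 0"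
  proof -
    fix i j
    have "lam i * \<gamma> * Rn^2 - L * E > 0" using Tk[of i] LE by linarith
    then show "- y i * (snd W $ j \<bullet> x i) > 0" using B2(1)[of i j] c by (smt (verit) mult_pos_pos)
  qed
qed



definition coef :: "real \<Rightarrow> real \<Rightarrow> real" where
  "coef \<gamma> yy = (if yy = 1 then 1 else - \<gamma>)"

lemma rowrep_signs:
  assumes R: "rowrep c \<gamma> lam yy x w" and S: "\<And>i. yy i * (w \<bullet> x i) > 0" and yy: "\<And>i. yy i = 1 \<or> yy i = -1"
  shows "w = c *\<^sub>R (\<Sum>i\<in>UNIV. (lam i * coef \<gamma> (yy i)) *\<^sub>R x i)"
proof -
  obtain s where w: "w = c *\<^sub>R (\<Sum>i\<in>UNIV. (lam i * yy i * s i) *\<^sub>R x i)"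
    and s: "\<And>i. (w \<bullet> x i > 0 \<longrightarrow> s i = 1) \<and> (w \<bullet> x i < 0 \<longrightarrow> s i = \<gamma>)"
    using R unfolding rowrep_def by blast
  have e: "lam i * yy i * s i = lam i * coef \<gamma> (yy i)" for i
  proof (cases "yy i = 1")
    case True
    then have "w \<bullet> x i > 0" using S[of i] by simp
    then show ?thesis using s[of i] True by (simp add: coef_def)
  next
    case False
    then have "yy i = -1" using yy[of i] by auto
    then have "w \<bullet> x i < 0" using S[of i] by simp
    then show ?thesis using s[of i] \<open>yy i = -1\<close> by (simp add: coef_def)
  qed
  have "(\<Sum>i\<in>UNIV. (lam i * yy i * s i) *\<^sub>R x i) = (\<Sum>i\<in>UNIV. (lam i * coef \<gamma> (yy i)) *\<^sub>R x i)"
    by (intro sum.cong refl) (simp only: e)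
  then show ?thesis using w by simp
qed

lemma sign_leaky_coef:
  assumes "yy = 1 \<or> yy = -1" "yy * a > 0" "\<gamma> \<le> 1"
  shows "yy * leaky \<gamma> a = coef \<gamma> yy * a"
  using leaky_F3[OF assms] unfolding coef_def .

lemma Hrow:
  fixes x :: "'n::finite \<Rightarrow> 'a::real_inner"
  assumes g: "0 < \<gamma>" "\<gamma> < 1" and c: "c > 0" and yy: "\<And>i. yy i = 1 \<or> yy i = -1"
    and lam: "\<And>i. 0 < lam i" "\<And>i. lam i \<le> Lm"
    and X: "\<And>i j. i \<noteq> j \<Longrightarrow> \<bar>x i \<bullet> x j\<bar> \<le> D" and D0: "0 \<le> D"
    and N: "\<And>i. Rn^2 \<le> x i \<bullet> x i"
    and key: "\<And>i. 2 * Lm * (real CARD('n) * D) < (1 + \<gamma>) * lam i * Rn^2"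
  defines "V \<equiv> c *\<^sub>R (\<Sum>i\<in>UNIV. (lam i * coef \<gamma> (yy i)) *\<^sub>R x i)"
  defines "h \<equiv> \<lambda>w. (1/2) * (norm w)^2 - c * (\<Sum>i\<in>UNIV. lam i * yy i * leaky \<gamma> (w \<bullet> x i))"
  shows "h w \<ge> - (1/2) * (norm V)^2" and "h w = - (1/2) * (norm V)^2 \<Longrightarrow> w = V"
proof -
  define \<sigma> where "\<sigma> i = (if w \<bullet> x i \<ge> 0 then 1 else \<gamma>)" for i
  define \<alpha> where "\<alpha> i = lam i * coef \<gamma> (yy i)" for i
  define \<alpha>' where "\<alpha>' i = (if yy i = 1 then lam i * \<sigma> i else - \<gamma> * lam i)" for i
  define C where "C = c *\<^sub>R (\<Sum>i\<in>UNIV. \<alpha>' i *\<^sub>R x i)"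
  define \<delta> where "\<delta> i = \<alpha> i - \<alpha>' i" for i
  define \<beta> where "\<beta> i = \<alpha> i + \<alpha>' i" for i
  have lam0: "0 \<le> lam i" for i using lam(1)[of i] by simp
  have tm: "lam i * yy i * leaky \<gamma> (w \<bullet> x i) \<le> \<alpha>' i * (w \<bullet> x i)" for i
  proof (cases "yy i = 1")
    case True
    show ?thesis
    proof (cases "w \<bullet> x i \<ge> 0")
      case True2: True
      then show ?thesis using True g unfolding \<alpha>'_def \<sigma>_def by (simp add: leaky_nonneg)
    next
      case False
      then show ?thesis using True g unfolding \<alpha>'_def \<sigma>_def by (simp add: leaky_nonpos)
    qed
  next
    case False
    then have m: "yy i = -1" using yy[of i] by auto
    have "\<gamma> * (w \<bullet> x i) \<le> leaky \<gamma> (w \<bullet> x i)" unfolding leaky_def by simp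
    then have "lam i * (\<gamma> * (w \<bullet> x i)) \<le> lam i * leaky \<gamma> (w \<bullet> x i)" using lam0 by (rule mult_left_mono)
    then show ?thesis using m unfolding \<alpha>'_def by (simp add: algebra_simps)
  qed
  have step1: "c * (\<Sum>i\<in>UNIV. lam i * yy i * leaky \<gamma> (w \<bullet> x i)) \<le> w \<bullet> C"
  proof -
    have "(\<Sum>i\<in>UNIV. lam i * yy i * leaky \<gamma> (w \<bullet> x i)) \<le> (\<Sum>i\<in>UNIV. \<alpha>' i * (w \<bullet> x i))"
      by (rule sum_mono) (rule tm)
    moreover have "w \<bullet> C = c * (\<Sum>i\<in>UNIV. \<alpha>' i * (w \<bullet> x i))" unfolding C_def
      by (simp add: inner_sum_right)
    ultimately show ?thesis using c by (simp add: mult_left_mono)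
  qed
  have step2: "h w \<ge> (1/2) * (norm (w - C))^2 - (1/2) * (norm C)^2"
  proof -
    have "(norm (w - C))^2 = (norm w)^2 - 2 * (w \<bullet> C) + (norm C)^2"
      by (simp add: power2_norm_eq_inner inner_diff_left inner_diff_right inner_commute)
    then show ?thesis unfolding h_def using step1 by (simp add: field_simps)
  qed
  have VC: "V = c *\<^sub>R (\<Sum>i\<in>UNIV. \<alpha> i *\<^sub>R x i)" unfolding V_def \<alpha>_def ..
  have absb: "\<bar>\<beta> k\<bar> \<le> 2 * Lm" for k
  proof -
    have s: "\<gamma> \<le> \<sigma> k" "\<sigma> k \<le> 1" unfolding \<sigma>_def using g by auto
    have "\<bar>\<alpha> k\<bar> \<le> lam k" unfolding \<alpha>_def coef_def using g lam0[of k] by (auto simp: abs_mult intro: mult_left_le mult_left_le_one_le)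
    moreover have "\<bar>\<alpha>' k\<bar> \<le> lam k" unfolding \<alpha>'_def using g lam0[of k] s
      by (auto simp: abs_mult intro: mult_left_le mult_left_le_one_le)
    ultimately show ?thesis unfolding \<beta>_def using lam(2)[of k] by linarith
  qed
  have dpos: "\<delta> i * ((\<Sum>k\<in>UNIV. \<beta> k *\<^sub>R x k) \<bullet> x i) \<ge> 0" and
    dstrict: "\<delta> i \<noteq> 0 \<Longrightarrow> \<delta> i * ((\<Sum>k\<in>UNIV. \<beta> k *\<^sub>R x k) \<bullet> x i) > 0" for i
  proof -
    have cb: "\<bar>(\<Sum>k\<in>UNIV. \<beta> k *\<^sub>R x k) \<bullet> x i - \<beta> i * (x i \<bullet> x i)\<bar> \<le> 2 * Lm * (real CARD('n) * D)"
      by (rule cross_bound[OF X absb D0])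
    have "\<delta> i * ((\<Sum>k\<in>UNIV. \<beta> k *\<^sub>R x k) \<bullet> x i) > 0" if nz: "\<delta> i \<noteq> 0"
    proof -
      have y1: "yy i = 1" and sg: "\<sigma> i = \<gamma>" using nz g unfolding \<delta>_def \<alpha>_def \<alpha>'_def \<sigma>_def coef_def
        by (auto split: if_splits)
      have dp: "\<delta> i > 0" unfolding \<delta>_def \<alpha>_def \<alpha>'_def coef_def using y1 sg g lam(1)[of i]
        by (simp add: algebra_simps)
      have bi: "\<beta> i = (1 + \<gamma>) * lam i" unfolding \<beta>_def \<alpha>_def \<alpha>'_def coef_def using y1 sg
        by (simp add: algebra_simps)
      have "\<beta> i * (x i \<bullet> x i) \<ge> (1 + \<gamma>) * lam i * Rn^2"
        unfolding bi using N[of i] g lam(1)[of i] by (intro mult_left_mono) auto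
      then have "(\<Sum>k\<in>UNIV. \<beta> k *\<^sub>R x k) \<bullet> x i > 0" using cb key[of i] by linarith
      then show ?thesis using dp by simp
    qed
    moreover have "\<delta> i \<ge> 0" unfolding \<delta>_def \<alpha>_def \<alpha>'_def coef_def \<sigma>_def using g lam0[of i]
      by (auto simp: algebra_simps intro: mult_left_le mult_left_le_one_le)
    ultimately show "\<delta> i * ((\<Sum>k\<in>UNIV. \<beta> k *\<^sub>R x k) \<bullet> x i) \<ge> 0"
      by (cases "\<delta> i = 0") (auto intro: less_imp_le)
    show "\<delta> i \<noteq> 0 \<Longrightarrow> \<delta> i * ((\<Sum>k\<in>UNIV. \<beta> k *\<^sub>R x k) \<bullet> x i) > 0" by fact
  qed
  have diff: "(norm V)^2 - (norm C)^2 = c^2 * (\<Sum>i\<in>UNIV. \<delta> i * ((\<Sum>k\<in>UNIV. \<beta> k *\<^sub>R x k) \<bullet> x i))"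
  proof -
    have "(norm V)^2 - (norm C)^2 = (V - C) \<bullet> (V + C)"
      by (simp add: power2_norm_eq_inner inner_diff_left inner_diff_right inner_add_right inner_add_left inner_commute)
    also have "V - C = c *\<^sub>R (\<Sum>i\<in>UNIV. \<delta> i *\<^sub>R x i)"
      unfolding VC C_def \<delta>_def by (simp add: scaleR_diff_right[symmetric] sum_subtractf[symmetric] scaleR_diff_left)
    also have "V + C = c *\<^sub>R (\<Sum>k\<in>UNIV. \<beta> k *\<^sub>R x k)"
      unfolding VC C_def \<beta>_def by (simp add: scaleR_add_right[symmetric] sum.distrib[symmetric] scaleR_add_left)
    also have "(c *\<^sub>R (\<Sum>i\<in>UNIV. \<delta> i *\<^sub>R x i)) \<bullet> (c *\<^sub>R (\<Sum>k\<in>UNIV. \<beta> k *\<^sub>R x k))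
       = c^2 * (\<Sum>i\<in>UNIV. \<delta> i * ((\<Sum>k\<in>UNIV. \<beta> k *\<^sub>R x k) \<bullet> x i))"
    proof -
      define S where "S = (\<Sum>k\<in>UNIV. \<beta> k *\<^sub>R x k)"
      have "(c *\<^sub>R (\<Sum>i\<in>UNIV. \<delta> i *\<^sub>R x i)) \<bullet> (c *\<^sub>R S) = c^2 * ((\<Sum>i\<in>UNIV. \<delta> i *\<^sub>R x i) \<bullet> S)"
        by (simp add: power2_eq_square)
      also have "(\<Sum>i\<in>UNIV. \<delta> i *\<^sub>R x i) \<bullet> S = (\<Sum>i\<in>UNIV. \<delta> i * (x i \<bullet> S))"
        by (simp add: inner_sum_left)
      also have "\<dots> = (\<Sum>i\<in>UNIV. \<delta> i * (S \<bullet> x i))" by (simp add: inner_commute)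
      finally show ?thesis unfolding S_def .
    qed
    finally show ?thesis .
  qed
  have Cle: "(norm C)^2 \<le> (norm V)^2"
  proof -
    have "0 \<le> (\<Sum>i\<in>UNIV. \<delta> i * ((\<Sum>k\<in>UNIV. \<beta> k *\<^sub>R x k) \<bullet> x i))" by (rule sum_nonneg) (rule dpos)
    then have "0 \<le> c^2 * (\<Sum>i\<in>UNIV. \<delta> i * ((\<Sum>k\<in>UNIV. \<beta> k *\<^sub>R x k) \<bullet> x i))" by simp
    then show ?thesis using diff by linarith
  qed
  have Ceq: "V = C" if "(norm C)^2 = (norm V)^2"
  proof (rule ccontr)
    assume "V \<noteq> C"
    then obtain i where "\<delta> i \<noteq> 0"
      unfolding VC C_def \<delta>_def by (metis (no_types, lifting) eq_iff_diff_eq_0)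
    then have "0 < (\<Sum>i\<in>UNIV. \<delta> i * ((\<Sum>k\<in>UNIV. \<beta> k *\<^sub>R x k) \<bullet> x i))"
      using dstrict dpos by (intro sum_pos2[where i=i]) auto
    then show False using diff that c by simp
  qed
  have nn: "0 \<le> (norm (w - C))^2" by simp
  show "h w \<ge> - (1/2) * (norm V)^2" using step2 Cle nn by linarith
  assume eq: "h w = - (1/2) * (norm V)^2"
  then have "(norm C)^2 = (norm V)^2" "(norm (w - C))^2 = 0" using step2 Cle nn
    by linarith+
  then show "w = V" using Ceq by simp
qed



definition hfun :: "real \<Rightarrow> real \<Rightarrow> ('n::finite \<Rightarrow> real) \<Rightarrow> ('n \<Rightarrow> real) \<Rightarrow> ('n \<Rightarrow> 'a::real_inner) \<Rightarrow> 'a \<Rightarrow> real" where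
  "hfun c \<gamma> lam yy x w = (1/2) * (norm w)^2 - c * (\<Sum>i\<in>UNIV. lam i * yy i * leaky \<gamma> (w \<bullet> x i))"

lemma norm_vec_sq: "(norm (A :: real^'d^'m::finite))^2 = (\<Sum>j\<in>UNIV. (norm (A $ j))^2)"
  unfolding norm_vec_def L2_set_def by (simp add: sum_nonneg)

lemma norm_W_sq:
  fixes W :: "(real^'d^'m1::finite) \<times> (real^'d^'m2::finite)"
  shows "(norm W)^2 = (\<Sum>j\<in>UNIV. (norm (fst W $ j))^2) + (\<Sum>j\<in>UNIV. (norm (snd W $ j))^2)"
proof -
  have "W = (fst W, snd W)" by simp
  then have "(norm W)^2 = (norm (fst W))^2 + (norm (snd W))^2"
    by (metis norm_Pair add_nonneg_nonneg real_sqrt_pow2 zero_le_power2)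
  then show ?thesis by (simp add: norm_vec_sq)
qed

lemma swap_lemma:
  fixes a :: "'i::finite \<Rightarrow> 'j::finite \<Rightarrow> real"
  shows "(\<Sum>i\<in>UNIV. lam i * (c * (\<Sum>j\<in>UNIV. yy i * a i j))) = (\<Sum>j\<in>UNIV. c * (\<Sum>i\<in>UNIV. lam i * yy i * a i j))"
proof -
  have "(\<Sum>i\<in>UNIV. lam i * (c * (\<Sum>j\<in>UNIV. yy i * a i j))) = (\<Sum>i\<in>UNIV. \<Sum>j\<in>UNIV. c * (lam i * yy i * a i j))"
    by (simp add: sum_distrib_left ac_simps)
  also have "\<dots> = (\<Sum>j\<in>UNIV. \<Sum>i\<in>UNIV. c * (lam i * yy i * a i j))" by (rule sum.swap)
  also have "\<dots> = (\<Sum>j\<in>UNIV. c * (\<Sum>i\<in>UNIV. lam i * yy i * a i j))" by (simp add: sum_distrib_left)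
  finally show ?thesis .
qed

lemma hfun_sum:
  fixes w :: "'j::finite \<Rightarrow> 'a::real_inner"
  shows "(\<Sum>j\<in>UNIV. hfun c \<gamma> lam yy x (w j)) = (1/2) * (\<Sum>j\<in>UNIV. (norm (w j))^2)
     - (\<Sum>j\<in>UNIV. c * (\<Sum>i\<in>UNIV. lam i * yy i * leaky \<gamma> (w j \<bullet> x i)))"
  unfolding hfun_def by (simp add: sum_subtractf sum_distrib_left)

lemma lag_identity:
  fixes W :: "(real^'d^'m1::finite) \<times> (real^'d^'m2::finite)" and x :: "'n::finite \<Rightarrow> real^'d"
  defines "c \<equiv> 1 / sqrt (real (CARD('m1) + CARD('m2)))"
  shows "(1/2) * (norm W)^2 = (\<Sum>j\<in>UNIV. hfun c \<gamma> lam y x (fst W $ j))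
     + (\<Sum>j\<in>UNIV. hfun c \<gamma> lam (\<lambda>i. - y i) x (snd W $ j)) + (\<Sum>i\<in>UNIV. lam i * (y i * net \<gamma> W (x i)))"
proof -
  have nr: "y i * net \<gamma> W (x i) = c * (\<Sum>j\<in>UNIV. y i * leaky \<gamma> (fst W $ j \<bullet> x i))
            + c * (\<Sum>j\<in>UNIV. (- y i) * leaky \<gamma> (snd W $ j \<bullet> x i))" for i
    unfolding c_def by (rule net_rows)
  have "(\<Sum>i\<in>UNIV. lam i * (y i * net \<gamma> W (x i))) =
     (\<Sum>i\<in>UNIV. lam i * (c * (\<Sum>j\<in>UNIV. y i * leaky \<gamma> (fst W $ j \<bullet> x i))))
     + (\<Sum>i\<in>UNIV. lam i * (c * (\<Sum>j\<in>UNIV. (- y i) * leaky \<gamma> (snd W $ j \<bullet> x i))))"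
    unfolding nr by (simp add: distrib_left sum.distrib)
  also have "\<dots> = (\<Sum>j\<in>UNIV. c * (\<Sum>i\<in>UNIV. lam i * y i * leaky \<gamma> (fst W $ j \<bullet> x i)))
      + (\<Sum>j\<in>UNIV. c * (\<Sum>i\<in>UNIV. lam i * - y i * leaky \<gamma> (snd W $ j \<bullet> x i)))"
    by (simp only: swap_lemma)
  finally have S: "(\<Sum>i\<in>UNIV. lam i * (y i * net \<gamma> W (x i))) = (\<Sum>j\<in>UNIV. c * (\<Sum>i\<in>UNIV. lam i * y i * leaky \<gamma> (fst W $ j \<bullet> x i)))
      + (\<Sum>j\<in>UNIV. c * (\<Sum>i\<in>UNIV. lam i * - y i * leaky \<gamma> (snd W $ j \<bullet> x i)))" .
  have h1: "(\<Sum>j\<in>UNIV. hfun c \<gamma> lam y x (fst W $ j)) = (1/2) * (\<Sum>j\<in>UNIV. (norm (fst W $ j))^2)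
     - (\<Sum>j\<in>UNIV. c * (\<Sum>i\<in>UNIV. lam i * y i * leaky \<gamma> (fst W $ j \<bullet> x i)))" by (rule hfun_sum)
  have h2: "(\<Sum>j\<in>UNIV. hfun c \<gamma> lam (\<lambda>i. - y i) x (snd W $ j)) = (1/2) * (\<Sum>j\<in>UNIV. (norm (snd W $ j))^2)
     - (\<Sum>j\<in>UNIV. c * (\<Sum>i\<in>UNIV. lam i * - y i * leaky \<gamma> (snd W $ j \<bullet> x i)))" by (rule hfun_sum)
  show ?thesis using S h1 h2 norm_W_sq[of W] by linarith
qed

lemma P_opt:
  fixes W :: "(real^'d^'m1::finite) \<times> (real^'d^'m2::finite)" and x :: "'n::finite \<Rightarrow> real^'d"
  defines "c \<equiv> 1 / sqrt (real (CARD('m1) + CARD('m2)))"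
  assumes lam: "\<And>i. 0 \<le> lam i" and tight: "\<And>i. y i * net \<gamma> W (x i) = 1"
    and rv: "\<And>j. fst W $ j = v" and ru: "\<And>j. snd W $ j = u"
    and Hv: "\<And>w. hfun c \<gamma> lam y x w \<ge> hfun c \<gamma> lam y x v"
    and Hv_eq: "\<And>w. hfun c \<gamma> lam y x w = hfun c \<gamma> lam y x v \<Longrightarrow> w = v"
    and Hu: "\<And>w. hfun c \<gamma> lam (\<lambda>i. - y i) x w \<ge> hfun c \<gamma> lam (\<lambda>i. - y i) x u"
    and Hu_eq: "\<And>w. hfun c \<gamma> lam (\<lambda>i. - y i) x w = hfun c \<gamma> lam (\<lambda>i. - y i) x u \<Longrightarrow> w = u"
  shows "P_global_opt \<gamma> x y W \<and> (\<forall>W'. P_global_opt \<gamma> x y W' \<longrightarrow> W' = W)"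
proof -
  define hv where "hv = hfun c \<gamma> lam y x"
  define hu where "hu = hfun c \<gamma> lam (\<lambda>i. - y i) x"
  have LW: "(1/2) * (norm W)^2 = (\<Sum>j\<in>(UNIV::'m1 set). hv v) + (\<Sum>j\<in>(UNIV::'m2 set). hu u) + (\<Sum>i\<in>UNIV. lam i)"
    using lag_identity[of W \<gamma> lam y x] unfolding c_def[symmetric] hv_def hu_def rv ru tight by simp
  have key: "(1/2) * (norm W')^2 - (1/2) * (norm W)^2 =
      (\<Sum>j\<in>UNIV. hv (fst W' $ j) - hv v) + (\<Sum>j\<in>UNIV. hu (snd W' $ j) - hu u)
      + (\<Sum>i\<in>UNIV. lam i * (y i * net \<gamma> W' (x i) - 1))" for W' :: "(real^'d^'m1) \<times> (real^'d^'m2)"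
  proof -
    have A: "(\<Sum>j\<in>UNIV. hv (fst W' $ j) - hv v) = (\<Sum>j\<in>UNIV. hv (fst W' $ j)) - real CARD('m1) * hv v"
      by (simp add: sum_subtractf)
    have B: "(\<Sum>j\<in>UNIV. hu (snd W' $ j) - hu u) = (\<Sum>j\<in>UNIV. hu (snd W' $ j)) - real CARD('m2) * hu u"
      by (simp add: sum_subtractf)
    have C: "(\<Sum>i\<in>UNIV. lam i * (y i * net \<gamma> W' (x i) - 1)) = (\<Sum>i\<in>UNIV. lam i * (y i * net \<gamma> W' (x i))) - (\<Sum>i\<in>UNIV. lam i)"
      by (simp add: sum_subtractf right_diff_distrib)
    have L': "(1/2) * (norm W')^2 = (\<Sum>j\<in>UNIV. hv (fst W' $ j))
     + (\<Sum>j\<in>UNIV. hu (snd W' $ j)) + (\<Sum>i\<in>UNIV. lam i * (y i * net \<gamma> W' (x i)))"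
      using lag_identity[of W' \<gamma> lam y x] unfolding c_def[symmetric] hv_def[symmetric] hu_def[symmetric] .
    have LW': "(1/2) * (norm W)^2 = real CARD('m1) * hv v + real CARD('m2) * hu u + (\<Sum>i\<in>UNIV. lam i)"
      using LW by simp
    show ?thesis using A B C L' LW' by linarith
  qed
  have nn1: "\<And>j. 0 \<le> hv (fst W' $ j) - hv v" and nn2: "\<And>j. 0 \<le> hu (snd W' $ j) - hu u" for W' :: "(real^'d^'m1) \<times> (real^'d^'m2)"
    using Hv Hu unfolding hv_def hu_def by auto
  have nn3: "\<And>i. 0 \<le> lam i * (y i * net \<gamma> W' (x i) - 1)" if "P_feasible \<gamma> x y W'" for W' :: "(real^'d^'m1) \<times> (real^'d^'m2)"
    using that lam unfolding P_feasible_def by (simp add: mult_nonneg_nonneg)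
  have feasW: "P_feasible \<gamma> x y W" unfolding P_feasible_def using tight by simp
  have ge: "P_obj W \<le> P_obj W'" if f: "P_feasible \<gamma> x y W'" for W' :: "(real^'d^'m1) \<times> (real^'d^'m2)"
  proof -
    have s1: "0 \<le> (\<Sum>j\<in>UNIV. hv (fst W' $ j) - hv v)" by (rule sum_nonneg) (rule nn1)
    have s2: "0 \<le> (\<Sum>j\<in>UNIV. hu (snd W' $ j) - hu u)" by (rule sum_nonneg) (rule nn2)
    have s3: "0 \<le> (\<Sum>i\<in>UNIV. lam i * (y i * net \<gamma> W' (x i) - 1))" by (rule sum_nonneg) (rule nn3[OF f])
    show ?thesis unfolding P_obj_def using key[of W'] s1 s2 s3 by linarith
  qed
  have opt: "P_global_opt \<gamma> x y W" unfolding P_global_opt_def using feasW ge by blast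
  have uniq: "W' = W" if "P_global_opt \<gamma> x y W'" for W'
  proof -
    have f: "P_feasible \<gamma> x y W'" using that unfolding P_global_opt_def by blast
    have "P_obj W' \<le> P_obj W" using that feasW unfolding P_global_opt_def by blast
    then have le: "(\<Sum>j\<in>UNIV. hv (fst W' $ j) - hv v) + (\<Sum>j\<in>UNIV. hu (snd W' $ j) - hu u)
      + (\<Sum>i\<in>UNIV. lam i * (y i * net \<gamma> W' (x i) - 1)) \<le> 0"
    proof -
      have "(1/2)*(norm W')^2 \<le> (1/2)*(norm W)^2" using \<open>P_obj W' \<le> P_obj W\<close> unfolding P_obj_def .
      then show ?thesis using key[of W'] by linarith
    qed
    have s1: "0 \<le> (\<Sum>j\<in>UNIV. hv (fst W' $ j) - hv v)" by (rule sum_nonneg) (rule nn1)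
    have s2: "0 \<le> (\<Sum>j\<in>UNIV. hu (snd W' $ j) - hu u)" by (rule sum_nonneg) (rule nn2)
    have s3: "0 \<le> (\<Sum>i\<in>UNIV. lam i * (y i * net \<gamma> W' (x i) - 1))" by (rule sum_nonneg) (rule nn3[OF f])
    have z1: "(\<Sum>j\<in>UNIV. hv (fst W' $ j) - hv v) = 0" using le s1 s2 s3 by linarith
    have z2: "(\<Sum>j\<in>UNIV. hu (snd W' $ j) - hu u) = 0" using le s1 s2 s3 by linarith
    have "hv (fst W' $ j) - hv v = 0" for j
      using sum_nonneg_eq_0_iff[of UNIV "\<lambda>j. hv (fst W' $ j) - hv v"] nn1 z1 by simp
    then have e1: "fst W' $ j = fst W $ j" for j using Hv_eq rv unfolding hv_def by simp
    have "hu (snd W' $ j) - hu u = 0" for j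
      using sum_nonneg_eq_0_iff[of UNIV "\<lambda>j. hu (snd W' $ j) - hu u"] nn2 z2 by simp
    then have e2: "snd W' $ j = snd W $ j" for j using Hu_eq ru unfolding hu_def by simp
    show ?thesis by (rule prod_eqI) (simp_all add: vec_eq_iff e1 e2)
  qed
  show ?thesis using opt uniq by blast
qed



lemma hV:
  fixes x :: "'n::finite \<Rightarrow> 'a::real_inner"
  assumes V: "V = c *\<^sub>R (\<Sum>i\<in>UNIV. (lam i * coef \<gamma> (yy i)) *\<^sub>R x i)"
    and S: "\<And>i. yy i * (V \<bullet> x i) > 0" and yy: "\<And>i. yy i = 1 \<or> yy i = -1" and g: "\<gamma> \<le> 1"
  shows "hfun c \<gamma> lam yy x V = - (1/2) * (norm V)^2"
proof -
  have e: "lam i * yy i * leaky \<gamma> (V \<bullet> x i) = lam i * coef \<gamma> (yy i) * (V \<bullet> x i)" for i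
    using sign_leaky_coef[OF yy[of i] S[of i] g] by (simp add: mult.assoc)
  have "(\<Sum>i\<in>UNIV. lam i * yy i * leaky \<gamma> (V \<bullet> x i)) = (\<Sum>i\<in>UNIV. lam i * coef \<gamma> (yy i) * (V \<bullet> x i))"
    by (intro sum.cong refl) (rule e)
  then have "c * (\<Sum>i\<in>UNIV. lam i * yy i * leaky \<gamma> (V \<bullet> x i)) = c * (\<Sum>i\<in>UNIV. lam i * coef \<gamma> (yy i) * (V \<bullet> x i))"
    by simp
  also have "\<dots> = V \<bullet> V" by (subst (2) V) (simp add: inner_sum_right sum_distrib_left)
  finally show ?thesis unfolding hfun_def by (simp add: power2_norm_eq_inner)
qed

lemma Hrow':
  fixes x :: "'n::finite \<Rightarrow> 'a::real_inner"
  assumes g: "0 < \<gamma>" "\<gamma> < 1" and c: "c > 0" and yy: "\<And>i. yy i = 1 \<or> yy i = -1"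
    and lam: "\<And>i. 0 < lam i" "\<And>i. lam i \<le> Lm"
    and X: "\<And>i j. i \<noteq> j \<Longrightarrow> \<bar>x i \<bullet> x j\<bar> \<le> D" and D0: "0 \<le> D"
    and N: "\<And>i. Rn^2 \<le> x i \<bullet> x i"
    and key: "\<And>i. 2 * Lm * (real CARD('n) * D) < (1 + \<gamma>) * lam i * Rn^2"
    and V: "V = c *\<^sub>R (\<Sum>i\<in>UNIV. (lam i * coef \<gamma> (yy i)) *\<^sub>R x i)"
    and S: "\<And>i. yy i * (V \<bullet> x i) > 0"
  shows "hfun c \<gamma> lam yy x w \<ge> hfun c \<gamma> lam yy x V"
    and "hfun c \<gamma> lam yy x w = hfun c \<gamma> lam yy x V \<Longrightarrow> w = V"
  using Hrow[where x=x and lam=lam and yy=yy and c=c and \<gamma>=\<gamma> and D=D and Rn=Rn and Lm=Lm and w=w, OF g c yy lam X D0 N key] hV[OF V S yy] g unfolding V[symmetric] hfun_def by auto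

lemma sign_eq:
  fixes M1 M2 a b :: real
  assumes "0 < M1" "0 < M2" "0 < \<gamma>" "\<gamma> < 1"
  shows "sign (M1 * leaky \<gamma> a - M2 * leaky \<gamma> b) = sign (M1 * a - M2 * b)"
proof -
  have "M1 * leaky \<gamma> a - M2 * leaky \<gamma> b > 0 \<longleftrightarrow> M1 * a - M2 * b > 0"
  proof (cases "a \<ge> 0"; cases "b \<ge> 0")
    assume "a \<ge> 0" "b \<ge> 0" then show ?thesis using assms by (simp add: leaky_nonneg)
  next
    assume a: "a \<ge> 0" and b: "\<not> b \<ge> 0"
    then have "M2 * b < 0" "M2 * (\<gamma> * b) < 0" using assms by (auto simp: mult_pos_neg)
    moreover have "M1 * a \<ge> 0" using a assms by simp
    moreover have "M1 * leaky \<gamma> a - M2 * leaky \<gamma> b = M1 * a - M2 * (\<gamma> * b)"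
      using a b assms by (simp add: leaky_nonneg leaky_nonpos)
    ultimately have "M1 * leaky \<gamma> a - M2 * leaky \<gamma> b > 0" "M1 * a - M2 * b > 0" by linarith+
    then show ?thesis by simp
  next
    assume a: "\<not> a \<ge> 0" and b: "b \<ge> 0"
    then have "M1 * a < 0" "M1 * (\<gamma> * a) < 0" using assms by (auto simp: mult_pos_neg)
    moreover have "M2 * b \<ge> 0" using b assms by simp
    moreover have "M1 * leaky \<gamma> a - M2 * leaky \<gamma> b = M1 * (\<gamma> * a) - M2 * b"
      using a b assms by (simp add: leaky_nonneg leaky_nonpos)
    ultimately have "\<not> M1 * leaky \<gamma> a - M2 * leaky \<gamma> b > 0" "\<not> M1 * a - M2 * b > 0" by linarith+
    then show ?thesis by simp
  next
    assume a: "\<not> a \<ge> 0" and b: "\<not> b \<ge> 0"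
    then have "M1 * leaky \<gamma> a - M2 * leaky \<gamma> b = \<gamma> * (M1 * a - M2 * b)"
      using assms by (simp add: leaky_nonpos algebra_simps)
    then show ?thesis using assms by (simp add: zero_less_mult_iff)
  qed
  then show ?thesis unfolding sign_def by simp
qed

lemma coef_neg1: "\<gamma> \<noteq> -1 \<or> True \<Longrightarrow> coef \<gamma> (-1) = - \<gamma>" by (simp add: coef_def)

lemma cvx_opt:
  fixes v u :: "real^'d" and x :: "'n::finite \<Rightarrow> real^'d" and m1 m2 :: nat
  defines "c \<equiv> 1 / sqrt (real (m1 + m2))"
  assumes m: "0 < m1" "0 < m2" and y: "\<And>i. y i = 1 \<or> y i = -1" and lam: "\<And>i. 0 \<le> lam i"
    and v: "v = c *\<^sub>R (\<Sum>i\<in>UNIV. (lam i * coef \<gamma> (y i)) *\<^sub>R x i)"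
    and u: "u = c *\<^sub>R (\<Sum>i\<in>UNIV. (lam i * coef \<gamma> (- y i)) *\<^sub>R x i)"
    and G1: "\<And>i. y i = 1 \<Longrightarrow> real m1 / sqrt (real (m1 + m2)) * (v \<bullet> x i)
        - \<gamma> * (real m2 / sqrt (real (m1 + m2))) * (u \<bullet> x i) = 1"
    and G2: "\<And>i. y i = -1 \<Longrightarrow> real m2 / sqrt (real (m1 + m2)) * (u \<bullet> x i)
        - \<gamma> * (real m1 / sqrt (real (m1 + m2))) * (v \<bullet> x i) = 1"
  shows "cvx_global_opt m1 m2 \<gamma> x y v u \<and> (\<forall>v' u'. cvx_global_opt m1 m2 \<gamma> x y v' u' \<longrightarrow> v' = v \<and> u' = u)"
proof -
  define a where "a = real m1 / sqrt (real (m1 + m2))"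
  define b where "b = real m2 / sqrt (real (m1 + m2))"
  have ac: "a = real m1 * c" and bc: "b = real m2 * c" unfolding a_def b_def c_def by simp_all
  define G where "G i p q = (if y i = 1 then a * (p \<bullet> x i) - \<gamma> * b * (q \<bullet> x i)
                             else b * (q \<bullet> x i) - \<gamma> * a * (p \<bullet> x i))" for i and p q :: "real^'d"
  have feas_iff: "cvx_feasible m1 m2 \<gamma> x y p q \<longleftrightarrow> (\<forall>i. G i p q \<ge> 1)" for p q
    unfolding cvx_feasible_def G_def a_def b_def using y by (auto simp: mult.assoc)
  have Gvu: "G i v u = 1" for i using G1[of i] G2[of i] y[of i] unfolding G_def a_def b_def by (auto simp: mult.assoc)
  have Glin: "G i p' q' - G i p q = G i (p' - p) (q' - q)" for i p q p' q'
    unfolding G_def by (simp add: inner_diff_left algebra_simps)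
  have ident: "real m1 * (v \<bullet> dv) + real m2 * (u \<bullet> du) = (\<Sum>i\<in>UNIV. lam i * G i dv du)" for dv du
  proof -
    have "real m1 * (v \<bullet> dv) = (\<Sum>i\<in>UNIV. lam i * coef \<gamma> (y i) * a * (x i \<bullet> dv))"
      unfolding v ac by (simp add: inner_sum_left sum_distrib_left algebra_simps)
    moreover have "real m2 * (u \<bullet> du) = (\<Sum>i\<in>UNIV. lam i * coef \<gamma> (- y i) * b * (x i \<bullet> du))"
      unfolding u bc by (simp add: inner_sum_left sum_distrib_left algebra_simps)
    moreover have "lam i * coef \<gamma> (y i) * a * (x i \<bullet> dv) + lam i * coef \<gamma> (- y i) * b * (x i \<bullet> du)
        = lam i * G i dv du" for i
      using y[of i] unfolding G_def coef_def by (auto simp: algebra_simps inner_commute)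
    ultimately show ?thesis by (simp add: sum.distrib[symmetric])
  qed
  have feas: "cvx_feasible m1 m2 \<gamma> x y v u" using feas_iff Gvu by simp
  have main: "cvx_obj m1 m2 v' u' \<ge> cvx_obj m1 m2 v u + real m1 / 2 * (norm (v' - v))^2 + real m2 / 2 * (norm (u' - u))^2"
    if f: "cvx_feasible m1 m2 \<gamma> x y v' u'" for v' u'
  proof -
    have "0 \<le> (\<Sum>i\<in>UNIV. lam i * G i (v' - v) (u' - u))"
    proof (rule sum_nonneg)
      fix i
      have "G i v' u' \<ge> 1" using f feas_iff by blast
      then have "G i (v' - v) (u' - u) \<ge> 0" using Glin[of i v' u' v u] Gvu[of i] by simp
      then show "0 \<le> lam i * G i (v' - v) (u' - u)" using lam[of i] by simp
    qed
    then have i0: "0 \<le> real m1 * (v \<bullet> (v' - v)) + real m2 * (u \<bullet> (u' - u))" using ident by simp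
    have nv: "(norm v')^2 = (norm v)^2 + 2 * (v \<bullet> (v' - v)) + (norm (v' - v))^2"
      by (simp add: power2_norm_eq_inner inner_diff_left inner_diff_right inner_commute)
    have nu: "(norm u')^2 = (norm u)^2 + 2 * (u \<bullet> (u' - u)) + (norm (u' - u))^2"
      by (simp add: power2_norm_eq_inner inner_diff_left inner_diff_right inner_commute)
    show ?thesis unfolding cvx_obj_def nv nu using i0 by (simp add: algebra_simps)
  qed
  have opt: "cvx_global_opt m1 m2 \<gamma> x y v u"
    unfolding cvx_global_opt_def using feas main by (smt (verit) zero_le_power2 of_nat_0_le_iff divide_nonneg_pos
       mult_nonneg_nonneg zero_less_numeral)
  have uniq: "v' = v \<and> u' = u" if o: "cvx_global_opt m1 m2 \<gamma> x y v' u'" for v' u'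
  proof -
    have f: "cvx_feasible m1 m2 \<gamma> x y v' u'" and le: "cvx_obj m1 m2 v' u' \<le> cvx_obj m1 m2 v u"
      using o feas unfolding cvx_global_opt_def by auto
    have p1: "0 \<le> real m1 / 2 * (norm (v' - v))^2" and p2: "0 \<le> real m2 / 2 * (norm (u' - u))^2" by simp_all
    then have "real m1 / 2 * (norm (v' - v))^2 = 0" "real m2 / 2 * (norm (u' - u))^2 = 0"
      using main[OF f] le by linarith+
    then show ?thesis using m by simp
  qed
  show ?thesis using opt uniq by blast
qed



lemma num_kappa:
  fixes p q \<gamma> :: real
  assumes pq: "0 < q" "q \<le> p" and g: "0 < \<gamma>" "\<gamma> < 1"
  shows "2 * (p^2 + q^2) / (min (p + \<gamma>*q) (q + \<gamma>*p))^2 \<le> (2 / (q/p + \<gamma>))^2"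
proof -
  have p: "0 < p" using pq by linarith
  have "(p + \<gamma>*q) - (q + \<gamma>*p) = (1 - \<gamma>) * (p - q)" by (simp add: algebra_simps)
  also have "\<dots> \<ge> 0" using pq g by simp
  finally have mu: "min (p + \<gamma>*q) (q + \<gamma>*p) = q + \<gamma>*p" by simp
  have pos: "q + \<gamma>*p > 0" using pq p g by (intro add_pos_pos mult_pos_pos) auto
  have e: "2 / (q/p + \<gamma>) = 2*p / (q + \<gamma>*p)" using p by (simp add: field_simps)
  have "2 * (p^2 + q^2) \<le> (2*p)^2" using pq p by (simp add: power2_eq_square mult_mono)
  then have "2 * (p^2 + q^2) / (q + \<gamma>*p)^2 \<le> (2*p)^2 / (q + \<gamma>*p)^2"
    using pos by (intro divide_right_mono) auto
  then show ?thesis unfolding mu e by (simp add: power_divide)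
qed

lemma norm_bound:
  fixes v u zs :: "real^'d" and x :: "'n::finite \<Rightarrow> real^'d" and m1 m2 :: nat
  assumes m: "0 < m1" "0 < m2" and g: "0 < \<gamma>" "\<gamma> < 1" and y: "\<And>i. y i = 1 \<or> y i = -1"
    and opt: "cvx_global_opt m1 m2 \<gamma> x y v u" and zs: "\<And>i. y i * (zs \<bullet> x i) \<ge> 1"
  shows "norm (zvec m1 m2 v u) \<le> 2 / (sqrt (real (min m1 m2) / real (max m1 m2)) + \<gamma>) * norm zs"
proof -
  define p where "p = sqrt (real m1)"
  define q where "q = sqrt (real m2)"
  define sM where "sM = sqrt (real (m1 + m2))"
  have p: "p > 0" "p^2 = real m1" unfolding p_def using m by simp_all
  have q: "q > 0" "q^2 = real m2" unfolding q_def using m by simp_all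
  have sM: "sM > 0" "sM^2 = real m1 + real m2" unfolding sM_def using m by simp_all
  define \<mu> where "\<mu> = min (p + \<gamma>*q) (q + \<gamma>*p)"
  have mu: "\<mu> > 0" unfolding \<mu>_def using p q g by (auto intro!: add_pos_pos mult_pos_pos)
  define t where "t = sM / \<mu>"
  have t: "t > 0" unfolding t_def using sM mu by simp
  define v' where "v' = (t/p) *\<^sub>R zs"
  define u' where "u' = (- (t/q)) *\<^sub>R zs"
  have tsM: "t / sM = 1 / \<mu>" unfolding t_def using sM(1) by simp
  have K1: "t / sM * (p + \<gamma>*q) \<ge> 1" unfolding tsM using mu
    by (simp add: le_divide_eq \<mu>_def)
  have K2: "t / sM * (q + \<gamma>*p) \<ge> 1" unfolding tsM using mu
    by (simp add: le_divide_eq \<mu>_def)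
  have m1p: "real m1 / p = p" using p by (metis nonzero_mult_div_cancel_left power2_eq_square less_irrefl)
  have m2q: "real m2 / q = q" using q by (metis nonzero_mult_div_cancel_left power2_eq_square less_irrefl)
  have feas: "cvx_feasible m1 m2 \<gamma> x y v' u'"
    unfolding cvx_feasible_def
  proof (intro conjI allI impI)
    fix i assume yi: "y i = 1"
    have "real m1 / sqrt (real (m1 + m2)) * (v' \<bullet> x i) - \<gamma> * (real m2 / sqrt (real (m1 + m2))) * (u' \<bullet> x i)
        = t / sM * (real m1 / p + \<gamma> * (real m2 / q)) * (zs \<bullet> x i)"
      using p(1) q(1) sM(1) unfolding v'_def u'_def sM_def by (simp add: field_simps)
    also have "\<dots> = t / sM * (p + \<gamma>*q) * (zs \<bullet> x i)" by (simp add: m1p m2q)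
    also have "\<dots> \<ge> 1"
    proof -
      have "1 * 1 \<le> t / sM * (p + \<gamma>*q) * (zs \<bullet> x i)" using K1 zs[of i] yi by (intro mult_mono) auto
      then show ?thesis by simp
    qed
    finally show "1 \<le> real m1 / sqrt (real (m1 + m2)) * (v' \<bullet> x i) - \<gamma> * (real m2 / sqrt (real (m1 + m2))) * (u' \<bullet> x i)" .
  next
    fix i assume yi: "y i = -1"
    have "real m2 / sqrt (real (m1 + m2)) * (u' \<bullet> x i) - \<gamma> * (real m1 / sqrt (real (m1 + m2))) * (v' \<bullet> x i)
        = t / sM * (real m2 / q + \<gamma> * (real m1 / p)) * (- (zs \<bullet> x i))"
      using p(1) q(1) sM(1) unfolding v'_def u'_def sM_def by (simp add: field_simps)
    also have "\<dots> = t / sM * (q + \<gamma>*p) * (- (zs \<bullet> x i))" by (simp add: m1p m2q)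
    also have "\<dots> \<ge> 1"
    proof -
      have "1 * 1 \<le> t / sM * (q + \<gamma>*p) * (- (zs \<bullet> x i))" using K2 zs[of i] yi by (intro mult_mono) auto
      then show ?thesis by simp
    qed
    finally show "1 \<le> real m2 / sqrt (real (m1 + m2)) * (u' \<bullet> x i) - \<gamma> * (real m1 / sqrt (real (m1 + m2))) * (v' \<bullet> x i)" .
  qed
  have objv': "cvx_obj m1 m2 v' u' = t^2 * (norm zs)^2"
  proof -
    have "cvx_obj m1 m2 v' u' = real m1 / 2 * (t/p)^2 * (norm zs)^2 + real m2 / 2 * (t/q)^2 * (norm zs)^2"
      unfolding cvx_obj_def v'_def u'_def using t p(1) q(1) by (simp add: power_mult_distrib power_divide)
    also have "\<dots> = t^2 * (norm zs)^2" using p q m by (simp add: power_divide field_simps)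
    finally show ?thesis .
  qed
  have obj: "real m1 / 2 * (norm v)^2 + real m2 / 2 * (norm u)^2 \<le> t^2 * (norm zs)^2"
    using opt feas objv' unfolding cvx_global_opt_def cvx_obj_def by metis
  define A where "A = norm v"
  define B where "B = norm u"
  have nz: "norm (zvec m1 m2 v u) \<le> (real m1 * A + real m2 * B) / sM"
  proof -
    have "norm (zvec m1 m2 v u) \<le> norm ((real m1 / sM) *\<^sub>R v) + norm ((real m2 / sM) *\<^sub>R u)"
      unfolding zvec_def sM_def by (rule norm_triangle_ineq4)
    also have "\<dots> = (real m1 * A + real m2 * B) / sM" unfolding A_def B_def using sM by (simp add: add_divide_distrib)
    finally show ?thesis .
  qed
  have cs: "(real m1 * A + real m2 * B)^2 \<le> (real m1 + real m2) * (real m1 * A^2 + real m2 * B^2)"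
  proof -
    have "(real m1 + real m2) * (real m1 * A^2 + real m2 * B^2) - (real m1 * A + real m2 * B)^2
        = real m1 * real m2 * (A - B)^2" by (simp add: power2_eq_square algebra_simps)
    also have "\<dots> \<ge> 0" by simp
    finally show ?thesis by linarith
  qed
  have z0: "0 \<le> (real m1 * A + real m2 * B) / sM" unfolding A_def B_def using sM by simp
  have "(norm (zvec m1 m2 v u))^2 \<le> ((real m1 * A + real m2 * B) / sM)^2"
    using nz by (intro power_mono) auto
  also have "\<dots> = (real m1 * A + real m2 * B)^2 / (real m1 + real m2)" using sM by (simp add: power_divide)
  also have "\<dots> \<le> real m1 * A^2 + real m2 * B^2" using cs m by (simp add: divide_le_eq mult.commute)
  also have "\<dots> \<le> 2 * t^2 * (norm zs)^2" using obj unfolding A_def B_def by simp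
  finally have Z: "(norm (zvec m1 m2 v u))^2 \<le> 2 * t^2 * (norm zs)^2" .
  define \<kappa> where "\<kappa> = sqrt (real (min m1 m2) / real (max m1 m2))"
  have tk: "2 * t^2 \<le> (2 / (\<kappa> + \<gamma>))^2"
  proof (cases "m2 \<le> m1")
    case True
    then have "\<kappa> = q / p" unfolding \<kappa>_def p_def q_def by (simp add: min_def max_def real_sqrt_divide)
    moreover have "q \<le> p" unfolding p_def q_def using True by simp
    moreover have "2 * t^2 = 2 * (p^2 + q^2) / (min (p + \<gamma>*q) (q + \<gamma>*p))^2"
      unfolding t_def \<mu>_def using sM p q by (simp add: power_divide)
    ultimately show ?thesis using num_kappa[OF q(1) _ g, of p] by simp
  next
    case False
    then have "\<kappa> = p / q" unfolding \<kappa>_def p_def q_def by (simp add: min_def max_def real_sqrt_divide)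
    moreover have "p \<le> q" unfolding p_def q_def using False by simp
    moreover have "2 * t^2 = 2 * (q^2 + p^2) / (min (q + \<gamma>*p) (p + \<gamma>*q))^2"
      unfolding t_def \<mu>_def using sM p q by (simp add: power_divide min.commute add.commute)
    ultimately show ?thesis using num_kappa[OF p(1) _ g, of q] by simp
  qed
  have "(norm (zvec m1 m2 v u))^2 \<le> (2 / (\<kappa> + \<gamma>) * norm zs)^2"
  proof -
    have "2 * t^2 * (norm zs)^2 \<le> (2 / (\<kappa> + \<gamma>))^2 * (norm zs)^2" by (rule mult_right_mono[OF tk]) simp
    moreover have "(2 / (\<kappa> + \<gamma>) * norm zs)^2 = (2 / (\<kappa> + \<gamma>))^2 * (norm zs)^2" by (rule power_mult_distrib)
    ultimately show ?thesis using Z by linarith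
  qed
  moreover have "0 \<le> 2 / (\<kappa> + \<gamma>) * norm zs" unfolding \<kappa>_def using g by simp
  ultimately show ?thesis unfolding \<kappa>_def[symmetric] by (rule power2_le_imp_le)
qed



lemma split_sum:
  fixes x :: "'n::finite \<Rightarrow> 'a::real_vector"
  assumes y: "\<And>i. y i = 1 \<or> y i = -1"
  shows "(\<Sum>i\<in>UNIV. (lam i * coef \<gamma> (y i)) *\<^sub>R x i) = (\<Sum>i | y i = 1. lam i *\<^sub>R x i) - \<gamma> *\<^sub>R (\<Sum>i | y i = -1. lam i *\<^sub>R x i)"
proof -
  have "(\<Sum>i\<in>UNIV. (lam i * coef \<gamma> (y i)) *\<^sub>R x i) = (\<Sum>i\<in>UNIV. if y i = 1 then lam i *\<^sub>R x i else (- \<gamma>) *\<^sub>R (lam i *\<^sub>R x i))"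
    by (intro sum.cong refl) (simp add: coef_def)
  also have "\<dots> = (\<Sum>i\<in>UNIV \<inter> {i. y i = 1}. lam i *\<^sub>R x i) + (\<Sum>i\<in>UNIV \<inter> - {i. y i = 1}. (- \<gamma>) *\<^sub>R (lam i *\<^sub>R x i))"
    by (rule sum.If_cases) simp
  also have "UNIV \<inter> - {i. y i = 1} = {i. y i = -1}" using y by force
  moreover have "(\<Sum>i\<in>{i. y i = -1}. (- \<gamma>) *\<^sub>R (lam i *\<^sub>R x i)) = - (\<gamma> *\<^sub>R (\<Sum>i | y i = -1. lam i *\<^sub>R x i))"
    by (simp add: scaleR_sum_right sum_negf)
  ultimately show ?thesis by simp
qed

lemma net_eq_rows:
  fixes W :: "(real^'d^'m1::finite) \<times> (real^'d^'m2::finite)"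
  assumes "\<And>j. fst W $ j = v" "\<And>j. snd W $ j = u"
  shows "net \<gamma> W \<xi> = real CARD('m1) / sqrt (real (CARD('m1) + CARD('m2))) * leaky \<gamma> (v \<bullet> \<xi>)
     - real CARD('m2) / sqrt (real (CARD('m1) + CARD('m2))) * leaky \<gamma> (u \<bullet> \<xi>)"
  unfolding net_def assms by simp

lemma num5:
  fixes \<gamma> Rn Rx l :: real
  assumes "0<\<gamma>" "\<gamma><1" "0<Rn" "Rn \<le> Rx" "1/(2*Rx^2) < l"
  shows "2 * (3 / (2 * \<gamma>^2 * Rn^2)) * (\<gamma>^3*Rn^4/(3*Rx^2)) < (1 + \<gamma>) * l * Rn^2"
proof -
  have Rx: "0 < Rx" using assms by linarith
  have e: "2 * (3 / (2 * \<gamma>^2 * Rn^2)) * (\<gamma>^3*Rn^4/(3*Rx^2)) = 2 * \<gamma> * (1/(2*Rx^2)) * Rn^2"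
    using assms Rx by (simp add: field_simps power2_eq_square power3_eq_cube power4_eq_xxxx)
  have "2 * \<gamma> * (1/(2*Rx^2)) * Rn^2 \<le> (1 + \<gamma>) * (1/(2*Rx^2)) * Rn^2"
    using assms by (intro mult_right_mono) auto
  also have "\<dots> < (1 + \<gamma>) * l * Rn^2"
    using assms by (intro mult_strict_right_mono mult_strict_left_mono) auto
  finally show ?thesis unfolding e .
qed

lemma part1:
  fixes x :: "'n::finite \<Rightarrow> real^'d" and W :: "(real^'d^'m1::finite) \<times> (real^'d^'m2::finite)"
  assumes A: "0 < \<gamma> \<and> \<gamma> < 1 \<and> data_hyp \<gamma> x y \<and> kkt_point P_obj (P_cons \<gamma> x y) W"
  shows
      "(let m1 = CARD('m1); m2 = CARD('m2); m = m1 + m2 in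
       (\<forall>i. y i * net \<gamma> W (x i) = 1) \<and>
       (\<exists>v u. (\<forall>j. fst W $ j = v) \<and> (\<forall>j. snd W $ j = u) \<and>
          dim (span (range (\<lambda>j. fst W $ j) \<union> range (\<lambda>j. snd W $ j))) \<le> 2 \<and>
          (\<exists>lam :: 'n \<Rightarrow> real.
             (\<forall>i. 1 / (2 * (Rmax x)^2) < lam i \<and> lam i < 3 / (2 * \<gamma>^2 * (Rmin x)^2)) \<and>
             v = (1 / sqrt (real m)) *\<^sub>R (\<Sum>i | y i = 1. lam i *\<^sub>R x i)
                 - (\<gamma> / sqrt (real m)) *\<^sub>R (\<Sum>i | y i = -1. lam i *\<^sub>R x i) \<and>
             u = (1 / sqrt (real m)) *\<^sub>R (\<Sum>i | y i = -1. lam i *\<^sub>R x i)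
                 - (\<gamma> / sqrt (real m)) *\<^sub>R (\<Sum>i | y i = 1. lam i *\<^sub>R x i)) \<and>
          (\<forall>i. y i * (v \<bullet> x i) > 0 \<and> y i * (u \<bullet> x i) < 0) \<and>
          P_global_opt \<gamma> x y W \<and> (\<forall>W'. P_global_opt \<gamma> x y W' \<longrightarrow> W' = W) \<and>
          cvx_global_opt m1 m2 \<gamma> x y v u \<and>
          (\<forall>v' u'. cvx_global_opt m1 m2 \<gamma> x y v' u' \<longrightarrow> v' = v \<and> u' = u) \<and>
          (\<forall>\<xi>. sign (net \<gamma> W \<xi>) = sign (zvec m1 m2 v u \<bullet> \<xi>)) \<and>
          (\<forall>i. y i * (zvec m1 m2 v u \<bullet> x i) \<ge> 1) \<and>
          (\<forall>zs. minnorm_sep x y zs \<longrightarrow>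
             norm (zvec m1 m2 v u)
               \<le> 2 / (sqrt (real (min m1 m2) / real (max m1 m2)) + \<gamma>) * norm zs)))"
proof -
  from A have g: "0 < \<gamma>" "\<gamma> < 1" and H: "data_hyp \<gamma> x y" and K: "kkt_point P_obj (P_cons \<gamma> x y) W" by auto
  define c where "c = 1 / sqrt (real (CARD('m1) + CARD('m2)))"
  define m1 where "m1 = CARD('m1)"
  define m2 where "m2 = CARD('m2)"
  have m: "0 < m1" "0 < m2" unfolding m1_def m2_def by simp_all
  have c: "c > 0" unfolding c_def by (rule c_pos)
  define M1 where "M1 = real m1 / sqrt (real (m1 + m2))"
  define M2 where "M2 = real m2 / sqrt (real (m1 + m2))"
  have M: "0 < M1" "0 < M2" unfolding M1_def M2_def using m by simp_all
  have y: "\<And>i. y i = 1 \<or> y i = -1" and xn: "\<And>i. x i \<noteq> 0" using data_facts[OF H g(1)] by auto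
  have yn: "\<And>i. - y i = 1 \<or> - y i = -1" using y by (metis minus_minus)
  obtain lam where lam0: "\<And>i. 0 \<le> lam i" and cs: "\<And>i. lam i * (1 - y i * net \<gamma> W (x i)) = 0"
    and feas: "\<And>i. 1 \<le> y i * net \<gamma> W (x i)" and r1: "\<And>j. rowrep c \<gamma> lam y x (fst W $ j)"
    and r2: "\<And>j. rowrep c \<gamma> lam (\<lambda>i. - y i) x (snd W $ j)"
    using kkt_unpack[OF K y xn g] unfolding c_def by blast
  note an = analysis[OF H g lam0 cs feas r1[unfolded c_def] r2[unfolded c_def]]
  define Rn where "Rn = Rmin x"
  define Rx where "Rx = Rmax x"
  have Rn: "0 < Rn" and N: "\<And>i. Rn \<le> norm (x i)" "\<And>i. norm (x i) \<le> Rx" and RnRx: "Rn \<le> Rx"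
    using data_facts[OF H g(1)] unfolding Rn_def Rx_def by auto
  have lamlb: "\<And>i. 1/(2*Rx^2) < lam i" and lamub: "\<And>i. lam i < 3/(2*\<gamma>^2*Rn^2)"
    using an(1,2) unfolding Rn_def Rx_def by auto
  have lampos: "\<And>i. 0 < lam i" using lamlb by (smt (verit) divide_pos_pos zero_less_power2 Rn RnRx)
  define v where "v = c *\<^sub>R (\<Sum>i\<in>UNIV. (lam i * coef \<gamma> (y i)) *\<^sub>R x i)"
  define u where "u = c *\<^sub>R (\<Sum>i\<in>UNIV. (lam i * coef \<gamma> (- y i)) *\<^sub>R x i)"
  have rv: "\<And>j. fst W $ j = v" unfolding v_def using rowrep_signs[OF r1 an(3) y] by simp
  have ru: "\<And>j. snd W $ j = u" unfolding u_def using rowrep_signs[OF r2 an(4) yn] by simp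
  have Sv: "\<And>i. y i * (v \<bullet> x i) > 0" using an(3) rv by metis
  have Su: "\<And>i. - y i * (u \<bullet> x i) > 0" using an(4) ru by metis
  have tight: "\<And>i. y i * net \<gamma> W (x i) = 1" using cs lampos by (metis eq_iff_diff_eq_0 mult_eq_0_iff less_irrefl)
  have netW: "\<And>\<xi>. net \<gamma> W \<xi> = M1 * leaky \<gamma> (v \<bullet> \<xi>) - M2 * leaky \<gamma> (u \<bullet> \<xi>)"
    unfolding M1_def M2_def m1_def m2_def by (rule net_eq_rows[OF rv ru])
  have vf: "v = (1 / sqrt (real (m1 + m2))) *\<^sub>R (\<Sum>i | y i = 1. lam i *\<^sub>R x i)
                 - (\<gamma> / sqrt (real (m1 + m2))) *\<^sub>R (\<Sum>i | y i = -1. lam i *\<^sub>R x i)"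
    unfolding v_def split_sum[OF y] c_def m1_def m2_def by (simp add: scaleR_diff_right)
  have uf: "u = (1 / sqrt (real (m1 + m2))) *\<^sub>R (\<Sum>i | y i = -1. lam i *\<^sub>R x i)
                 - (\<gamma> / sqrt (real (m1 + m2))) *\<^sub>R (\<Sum>i | y i = 1. lam i *\<^sub>R x i)"
  proof -
    have e1: "{i. - y i = 1} = {i. y i = -1}" by (auto simp: minus_equation_iff)
    have e2: "{i. - y i = -1} = {i. y i = 1}" by auto
    show ?thesis unfolding u_def split_sum[OF yn] e1 e2 c_def m1_def m2_def by (simp add: scaleR_diff_right)
  qed
  have dimle: "dim (span (range (\<lambda>j. fst W $ j) \<union> range (\<lambda>j. snd W $ j))) \<le> 2"
  proof -
    have "range (\<lambda>j. fst W $ j) \<union> range (\<lambda>j. snd W $ j) = {v, u}" using rv ru by auto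
    moreover have "dim {v, u} \<le> card {v, u}" by (rule dim_le_card') simp
    moreover have "card {v, u} \<le> 2" by (simp add: card_insert_if)
    ultimately show ?thesis by (simp add: dim_span)
  qed
  define D where "D = \<gamma>^3 * Rn^4 / (3 * Rx^2 * real CARD('n))"
  have X: "\<And>i j. i \<noteq> j \<Longrightarrow> \<bar>x i \<bullet> x j\<bar> \<le> D"
    using data_facts(5)[OF H g(1)] unfolding D_def Rn_def Rx_def by auto
  have D0: "0 \<le> D" unfolding D_def using g by simp
  have nD: "real CARD('n) * D = \<gamma>^3 * Rn^4 / (3 * Rx^2)" unfolding D_def by simp
  have NN: "\<And>i. Rn^2 \<le> x i \<bullet> x i" unfolding power2_norm_eq_inner[symmetric]
    using N(1) Rn by (intro power_mono) (auto intro: less_imp_le)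
  have key: "\<And>i. 2 * (3/(2*\<gamma>^2*Rn^2)) * (real CARD('n) * D) < (1 + \<gamma>) * lam i * Rn^2"
    unfolding nD using num5[OF g Rn RnRx lamlb] .
  have lamle: "\<And>i. lam i \<le> 3/(2*\<gamma>^2*Rn^2)" using lamub less_imp_le by blast
  have Pres: "P_global_opt \<gamma> x y W \<and> (\<forall>W'. P_global_opt \<gamma> x y W' \<longrightarrow> W' = W)"
  proof (rule P_opt[OF lam0 tight rv ru])
    show "\<And>w. hfun (1 / sqrt (real (CARD('m1) + CARD('m2)))) \<gamma> lam y x v \<le> hfun (1 / sqrt (real (CARD('m1) + CARD('m2)))) \<gamma> lam y x w"
      using Hrow'(1)[OF g c y lampos lamle X D0 NN key v_def Sv] unfolding c_def .
    show "\<And>w. hfun (1 / sqrt (real (CARD('m1) + CARD('m2)))) \<gamma> lam y x w = hfun (1 / sqrt (real (CARD('m1) + CARD('m2)))) \<gamma> lam y x v \<Longrightarrow> w = v"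
      using Hrow'(2)[OF g c y lampos lamle X D0 NN key v_def Sv] unfolding c_def .
    show "\<And>w. hfun (1 / sqrt (real (CARD('m1) + CARD('m2)))) \<gamma> lam (\<lambda>i. - y i) x u \<le> hfun (1 / sqrt (real (CARD('m1) + CARD('m2)))) \<gamma> lam (\<lambda>i. - y i) x w"
      using Hrow'(1)[OF g c yn lampos lamle X D0 NN key u_def Su] unfolding c_def .
    show "\<And>w. hfun (1 / sqrt (real (CARD('m1) + CARD('m2)))) \<gamma> lam (\<lambda>i. - y i) x w = hfun (1 / sqrt (real (CARD('m1) + CARD('m2)))) \<gamma> lam (\<lambda>i. - y i) x u \<Longrightarrow> w = u"
      using Hrow'(2)[OF g c yn lampos lamle X D0 NN key u_def Su] unfolding c_def .
  qed
  have G1: "M1 * (v \<bullet> x i) - \<gamma> * M2 * (u \<bullet> x i) = 1" if yi: "y i = 1" for i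
  proof -
    have "v \<bullet> x i > 0" "u \<bullet> x i < 0" using Sv[of i] Su[of i] yi by auto
    then have "net \<gamma> W (x i) = M1 * (v \<bullet> x i) - M2 * (\<gamma> * (u \<bullet> x i))"
      unfolding netW using g by (simp add: leaky_nonneg leaky_nonpos)
    then show ?thesis using tight[of i] yi by (simp add: algebra_simps)
  qed
  have G2: "M2 * (u \<bullet> x i) - \<gamma> * M1 * (v \<bullet> x i) = 1" if yi: "y i = -1" for i
  proof -
    have "v \<bullet> x i < 0" "u \<bullet> x i > 0" using Sv[of i] Su[of i] yi by auto
    then have "net \<gamma> W (x i) = M1 * (\<gamma> * (v \<bullet> x i)) - M2 * (u \<bullet> x i)"
      unfolding netW using g by (simp add: leaky_nonneg leaky_nonpos)
    then show ?thesis using tight[of i] yi by (simp add: algebra_simps)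
  qed
  have v_cvx: "v = (1 / sqrt (real (m1 + m2))) *\<^sub>R (\<Sum>i\<in>UNIV. (lam i * coef \<gamma> (y i)) *\<^sub>R x i)"
    unfolding v_def c_def m1_def m2_def ..
  have u_cvx: "u = (1 / sqrt (real (m1 + m2))) *\<^sub>R (\<Sum>i\<in>UNIV. (lam i * coef \<gamma> (- y i)) *\<^sub>R x i)"
    unfolding u_def c_def m1_def m2_def ..
  have Cres: "cvx_global_opt m1 m2 \<gamma> x y v u \<and> (\<forall>v' u'. cvx_global_opt m1 m2 \<gamma> x y v' u' \<longrightarrow> v' = v \<and> u' = u)"
    by (rule cvx_opt[OF m y lam0 v_cvx u_cvx])
       (use G1 G2 in \<open>simp_all add: M1_def M2_def mult.assoc\<close>)
  have zx: "\<And>\<xi>. zvec m1 m2 v u \<bullet> \<xi> = M1 * (v \<bullet> \<xi>) - M2 * (u \<bullet> \<xi>)"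
    unfolding zvec_def M1_def M2_def by (simp add: inner_diff_left)
  have sgn: "\<And>\<xi>. sign (net \<gamma> W \<xi>) = sign (zvec m1 m2 v u \<bullet> \<xi>)"
    unfolding netW zx by (rule sign_eq[OF M g])
  have marg: "\<And>i. y i * (zvec m1 m2 v u \<bullet> x i) \<ge> 1"
  proof -
    fix i
    show "y i * (zvec m1 m2 v u \<bullet> x i) \<ge> 1"
    proof (cases "y i = 1")
      case True
      then have "u \<bullet> x i < 0" using Su[of i] by simp
      moreover have "0 \<le> (1 - \<gamma>) * M2" using M g by simp
      ultimately have "(1 - \<gamma>) * M2 * (u \<bullet> x i) \<le> 0" by (simp add: mult_nonneg_nonpos)
      then have "M2 * (u \<bullet> x i) \<le> \<gamma> * M2 * (u \<bullet> x i)" by (simp add: algebra_simps)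
      then show ?thesis using G1[OF True] unfolding zx True mult_1 by linarith
    next
      case False
      then have yi: "y i = -1" using y[of i] by auto
      then have "v \<bullet> x i < 0" using Sv[of i] by simp
      moreover have "0 \<le> (1 - \<gamma>) * M1" using M g by simp
      ultimately have "(1 - \<gamma>) * M1 * (v \<bullet> x i) \<le> 0" by (simp add: mult_nonneg_nonpos)
      then have "M1 * (v \<bullet> x i) \<le> \<gamma> * M1 * (v \<bullet> x i)" by (simp add: algebra_simps)
      then show ?thesis using G2[OF yi] unfolding zx yi mult_minus1 by linarith
    qed
  qed
  have nb: "\<And>zs. minnorm_sep x y zs \<Longrightarrow> norm (zvec m1 m2 v u)
               \<le> 2 / (sqrt (real (min m1 m2) / real (max m1 m2)) + \<gamma>) * norm zs"
    by (rule norm_bound[OF m g y conjunct1[OF Cres]]) (auto simp: minnorm_sep_def)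
  have Sgn2: "\<And>i. y i * (v \<bullet> x i) > 0 \<and> y i * (u \<bullet> x i) < 0" using Sv Su by (simp add: mult_minus_left)
  have lb': "\<forall>i. 1 / (2 * (Rmax x)^2) < lam i \<and> lam i < 3 / (2 * \<gamma>^2 * (Rmin x)^2)"
    using lamlb lamub unfolding Rn_def Rx_def by blast
  have ex: "\<exists>lam :: 'n \<Rightarrow> real.
             (\<forall>i. 1 / (2 * (Rmax x)^2) < lam i \<and> lam i < 3 / (2 * \<gamma>^2 * (Rmin x)^2)) \<and>
             v = (1 / sqrt (real (m1 + m2))) *\<^sub>R (\<Sum>i | y i = 1. lam i *\<^sub>R x i)
                 - (\<gamma> / sqrt (real (m1 + m2))) *\<^sub>R (\<Sum>i | y i = -1. lam i *\<^sub>R x i) \<and>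
             u = (1 / sqrt (real (m1 + m2))) *\<^sub>R (\<Sum>i | y i = -1. lam i *\<^sub>R x i)
                 - (\<gamma> / sqrt (real (m1 + m2))) *\<^sub>R (\<Sum>i | y i = 1. lam i *\<^sub>R x i)"
    using lb' vf uf by blast
  have t': "\<forall>i. y i * net \<gamma> W (x i) = 1" using tight by blast
  have rv': "\<forall>j. fst W $ j = v" and ru': "\<forall>j. snd W $ j = u" using rv ru by blast+
  have S': "\<forall>i. y i * (v \<bullet> x i) > 0 \<and> y i * (u \<bullet> x i) < 0" using Sgn2 by blast
  have sg': "\<forall>\<xi>. sign (net \<gamma> W \<xi>) = sign (zvec m1 m2 v u \<bullet> \<xi>)" using sgn by blast
  have mg': "\<forall>i. y i * (zvec m1 m2 v u \<bullet> x i) \<ge> 1" using marg by blast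
  have nb': "\<forall>zs. minnorm_sep x y zs \<longrightarrow> norm (zvec m1 m2 v u)
               \<le> 2 / (sqrt (real (min m1 m2) / real (max m1 m2)) + \<gamma>) * norm zs" using nb by blast
  show ?thesis unfolding Let_def m1_def[symmetric] m2_def[symmetric]
    apply (rule conjI[OF t'])
    apply (rule exI[of _ v], rule exI[of _ u])
    using rv' ru' dimle ex S' conjunct1[OF Pres] conjunct2[OF Pres] conjunct1[OF Cres] conjunct2[OF Cres] sg' mg' nb'
    by (intro conjI) assumption+
qed



definition dleak :: "real \<Rightarrow> real \<Rightarrow> real" where
  "dleak \<gamma> a = (if a > 0 then 1 else \<gamma>)"

lemma leaky_deriv:
  assumes "a \<noteq> 0" "\<gamma> \<le> 1"
  shows "(leaky \<gamma> has_real_derivative dleak \<gamma> a) (at a)"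
proof (cases "a > 0")
  case True
  have "((\<lambda>t. t) has_real_derivative 1) (at a)" by (rule DERIV_ident)
  then have "(leaky \<gamma> has_real_derivative 1) (at a)"
    by (rule has_field_derivative_transform_within_open[of _ _ _ "{0<..}"])
       (use True assms in \<open>auto simp: leaky_nonneg\<close>)
  then show ?thesis using True by (simp add: dleak_def)
next
  case False
  then have neg: "a < 0" using assms by simp
  have "((\<lambda>t. \<gamma> * t) has_real_derivative \<gamma>) (at a)" using DERIV_cmult[OF DERIV_ident, of \<gamma>] by simp
  then have "(leaky \<gamma> has_real_derivative \<gamma>) (at a)"
    by (rule has_field_derivative_transform_within_open[of _ _ _ "{..<0}"])
       (use neg assms in \<open>auto simp: leaky_nonpos\<close>)
  then show ?thesis using False by (simp add: dleak_def)
qed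

lemma row_deriv:
  fixes W :: "(real^'d^'m1::finite) \<times> (real^'d^'m2::finite)"
  assumes "\<gamma> \<le> 1"
  shows "fst W $ j \<bullet> \<xi> \<noteq> 0 \<Longrightarrow> ((\<lambda>W. leaky \<gamma> (fst W $ j \<bullet> \<xi>)) has_derivative (\<lambda>h. dleak \<gamma> (fst W $ j \<bullet> \<xi>) * (fst h $ j \<bullet> \<xi>))) (at W)"
    and "snd W $ k \<bullet> \<xi> \<noteq> 0 \<Longrightarrow> ((\<lambda>W. leaky \<gamma> (snd W $ k \<bullet> \<xi>)) has_derivative (\<lambda>h. dleak \<gamma> (snd W $ k \<bullet> \<xi>) * (snd h $ k \<bullet> \<xi>))) (at W)"
proof -
  assume nz: "fst W $ j \<bullet> \<xi> \<noteq> 0"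
  have bl: "bounded_linear (\<lambda>W :: (real^'d^'m1) \<times> (real^'d^'m2). fst W $ j \<bullet> \<xi>)"
    by (intro bounded_linear_compose[OF bounded_linear_inner_left] bounded_linear_compose[OF bounded_linear_vec_nth]
        bounded_linear_fst)
  have l: "((\<lambda>W :: (real^'d^'m1) \<times> (real^'d^'m2). fst W $ j \<bullet> \<xi>) has_derivative (\<lambda>h. fst h $ j \<bullet> \<xi>)) (at W)"
    by (rule bounded_linear_imp_has_derivative[OF bl])
  have d: "(leaky \<gamma> has_derivative (\<lambda>t. dleak \<gamma> (fst W $ j \<bullet> \<xi>) * t)) (at (fst W $ j \<bullet> \<xi>))"
    using leaky_deriv[OF nz assms] by (simp add: has_field_derivative_def)
  show "((\<lambda>W. leaky \<gamma> (fst W $ j \<bullet> \<xi>)) has_derivative (\<lambda>h. dleak \<gamma> (fst W $ j \<bullet> \<xi>) * (fst h $ j \<bullet> \<xi>))) (at W)"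
    using has_derivative_compose[OF l d] .
next
  assume nz: "snd W $ k \<bullet> \<xi> \<noteq> 0"
  have bl: "bounded_linear (\<lambda>W :: (real^'d^'m1) \<times> (real^'d^'m2). snd W $ k \<bullet> \<xi>)"
    by (intro bounded_linear_compose[OF bounded_linear_inner_left] bounded_linear_compose[OF bounded_linear_vec_nth]
        bounded_linear_snd)
  have l: "((\<lambda>W :: (real^'d^'m1) \<times> (real^'d^'m2). snd W $ k \<bullet> \<xi>) has_derivative (\<lambda>h. snd h $ k \<bullet> \<xi>)) (at W)"
    by (rule bounded_linear_imp_has_derivative[OF bl])
  have d: "(leaky \<gamma> has_derivative (\<lambda>t. dleak \<gamma> (snd W $ k \<bullet> \<xi>) * t)) (at (snd W $ k \<bullet> \<xi>))"
    using leaky_deriv[OF nz assms] by (simp add: has_field_derivative_def)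
  show "((\<lambda>W. leaky \<gamma> (snd W $ k \<bullet> \<xi>)) has_derivative (\<lambda>h. dleak \<gamma> (snd W $ k \<bullet> \<xi>) * (snd h $ k \<bullet> \<xi>))) (at W)"
    using has_derivative_compose[OF l d] .
qed

lemma inner_chi: "(\<chi> j. f j) \<bullet> (A :: 'a::real_inner^'m::finite) = (\<Sum>j\<in>UNIV. f j \<bullet> A $ j)"
  by (simp only: inner_vec_def vec_lambda_beta)

lemma Pcons_deriv:
  fixes W :: "(real^'d^'m1::finite) \<times> (real^'d^'m2::finite)" and x :: "'n \<Rightarrow> real^'d"
  defines "c \<equiv> 1 / sqrt (real (CARD('m1) + CARD('m2)))"
  assumes g: "\<gamma> \<le> 1" and nz1: "\<And>j. fst W $ j \<bullet> x i \<noteq> 0" and nz2: "\<And>j. snd W $ j \<bullet> x i \<noteq> 0"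
  shows "(P_cons \<gamma> x y i has_derivative (\<lambda>h. ((\<chi> j. (- y i * c * dleak \<gamma> (fst W $ j \<bullet> x i)) *\<^sub>R x i),
                                             (\<chi> j. (y i * c * dleak \<gamma> (snd W $ j \<bullet> x i)) *\<^sub>R x i)) \<bullet> h)) (at W)"
proof -
  have D: "((\<lambda>W. 1 - y i * ((\<Sum>j\<in>UNIV. c * leaky \<gamma> (fst W $ j \<bullet> x i)) - (\<Sum>j\<in>UNIV. c * leaky \<gamma> (snd W $ j \<bullet> x i))))
     has_derivative (\<lambda>h. 0 - y i * ((\<Sum>j\<in>UNIV. c * (dleak \<gamma> (fst W $ j \<bullet> x i) * (fst h $ j \<bullet> x i)))
        - (\<Sum>j\<in>UNIV. c * (dleak \<gamma> (snd W $ j \<bullet> x i) * (snd h $ j \<bullet> x i)))))) (at W)"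
    by (intro has_derivative_diff has_derivative_const has_derivative_mult_right has_derivative_sum
          row_deriv[OF g] nz1 nz2)
  show ?thesis
    unfolding P_cons_def net_def c_def[symmetric]
  proof (rule has_derivative_eq_rhs[OF D])
    show "(\<lambda>h. 0 - y i * ((\<Sum>j\<in>UNIV. c * (dleak \<gamma> (fst W $ j \<bullet> x i) * (fst h $ j \<bullet> x i)))
        - (\<Sum>j\<in>UNIV. c * (dleak \<gamma> (snd W $ j \<bullet> x i) * (snd h $ j \<bullet> x i))))) =
      (\<lambda>h. ((\<chi> j. (- y i * c * dleak \<gamma> (fst W $ j \<bullet> x i)) *\<^sub>R x i),
             (\<chi> j. (y i * c * dleak \<gamma> (snd W $ j \<bullet> x i)) *\<^sub>R x i)) \<bullet> h)"
    proof (rule ext)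
      fix h :: "(real^'d^'m1) \<times> (real^'d^'m2)"
      have "((\<chi> j. (- y i * c * dleak \<gamma> (fst W $ j \<bullet> x i)) *\<^sub>R x i),
             (\<chi> j. (y i * c * dleak \<gamma> (snd W $ j \<bullet> x i)) *\<^sub>R x i)) \<bullet> h
         = (\<Sum>j\<in>UNIV. (- y i * c * dleak \<gamma> (fst W $ j \<bullet> x i)) * (fst h $ j \<bullet> x i))
         + (\<Sum>j\<in>UNIV. (y i * c * dleak \<gamma> (snd W $ j \<bullet> x i)) * (snd h $ j \<bullet> x i))"
        unfolding inner_prod_def fst_conv snd_conv inner_chi by (simp add: inner_commute)
      then show "0 - y i * ((\<Sum>j\<in>UNIV. c * (dleak \<gamma> (fst W $ j \<bullet> x i) * (fst h $ j \<bullet> x i)))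
        - (\<Sum>j\<in>UNIV. c * (dleak \<gamma> (snd W $ j \<bullet> x i) * (snd h $ j \<bullet> x i)))) =
        ((\<chi> j. (- y i * c * dleak \<gamma> (fst W $ j \<bullet> x i)) *\<^sub>R x i),
             (\<chi> j. (y i * c * dleak \<gamma> (snd W $ j \<bullet> x i)) *\<^sub>R x i)) \<bullet> h"
        by (simp add: sum_distrib_left algebra_simps sum_negf)
    qed
  qed
qed



definition ex_x :: "3 \<Rightarrow> real^3" where
  "ex_x i = (if i = 1 then axis 1 1 else if i = 2 then axis 2 1 else axis 3 1 + (1/1000) *\<^sub>R axis 1 1)"
definition ex_y :: "3 \<Rightarrow> real" where
  "ex_y i = (if i = 3 then -1 else 1)"

lemma ex_x_simps: "ex_x 1 = axis 1 1" "ex_x 2 = axis 2 1" "ex_x 3 = axis 3 1 + (1/1000) *\<^sub>R axis 1 1"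
  by (simp_all add: ex_x_def)

lemma ex_y_simps: "ex_y 1 = 1" "ex_y 2 = 1" "ex_y 3 = -1" by (simp_all add: ex_y_def)

lemma ex_gram:
  "ex_x 1 \<bullet> ex_x 1 = 1" "ex_x 2 \<bullet> ex_x 2 = 1" "ex_x 3 \<bullet> ex_x 3 = 1 + 1/1000000"
  "ex_x 1 \<bullet> ex_x 2 = 0" "ex_x 2 \<bullet> ex_x 1 = 0" "ex_x 1 \<bullet> ex_x 3 = 1/1000" "ex_x 3 \<bullet> ex_x 1 = 1/1000"
  "ex_x 2 \<bullet> ex_x 3 = 0" "ex_x 3 \<bullet> ex_x 2 = 0"
  by (simp_all add: ex_x_def inner_axis_axis inner_add_left inner_add_right)

lemma ex_norms: "norm (ex_x 1) = 1" "norm (ex_x 2) = 1" "norm (ex_x 3) = sqrt (1 + 1/1000000)"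
  unfolding norm_eq_sqrt_inner ex_gram by simp_all

lemma ex_Rmin: "Rmin ex_x = 1"
proof -
  have "range (\<lambda>i. norm (ex_x i)) = {1, sqrt (1 + 1/1000000)}"
    unfolding UNIV_3 by (auto simp: ex_norms)
  then show ?thesis unfolding Rmin_def by simp
qed

lemma ex_Rmax: "Rmax ex_x = sqrt (1 + 1/1000000)"
proof -
  have "range (\<lambda>i. norm (ex_x i)) = {1, sqrt (1 + 1/1000000)}"
    unfolding UNIV_3 by (auto simp: ex_norms)
  then show ?thesis unfolding Rmax_def by simp
qed

lemma ex_data: "data_hyp (1/2) ex_x ex_y"
proof -
  have ip: "\<bar>ex_x i \<bullet> ex_x j\<bar> \<le> 1/1000" if "i \<noteq> j" for i j
    using that exhaust_3[of i] exhaust_3[of j] by (auto simp: ex_gram)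
  define K where "K = 3 * (1 / (1/2::real)^3) * (Rmax ex_x / Rmin ex_x)^2 * real CARD(3)"
  have K0: "0 \<le> K" unfolding K_def by simp
  have K1: "K * (1/1000) \<le> (Rmin ex_x)^2"
    unfolding K_def ex_Rmin ex_Rmax by (simp add: power_divide)
  have "(Rmin ex_x)^2 \<ge> 3 * (1 / (1/2)^3) * (Rmax ex_x / Rmin ex_x)^2 * real CARD(3) * \<bar>ex_x i \<bullet> ex_x j\<bar>"
    if "i \<noteq> j" for i j
  proof -
    have "K * \<bar>ex_x i \<bullet> ex_x j\<bar> \<le> K * (1/1000)" using ip[OF that] K0 by (rule mult_left_mono)
    then show ?thesis using K1 unfolding K_def by linarith
  qed
  moreover have "ex_y i = 1 \<or> ex_y i = -1" for i by (simp add: ex_y_def)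
  moreover have "ex_x i \<noteq> 0" for i
  proof -
    have a: "ex_x 1 \<noteq> 0" proof assume "ex_x 1 = 0" then show False using ex_gram(1) by simp qed
    have b: "ex_x 2 \<noteq> 0" proof assume "ex_x 2 = 0" then show False using ex_gram(2) by simp qed
    have c: "ex_x 3 \<noteq> 0" proof assume "ex_x 3 = 0" then show False using ex_gram(3) by simp qed
    show ?thesis using exhaust_3[of i] a b c by auto
  qed
  ultimately show ?thesis unfolding data_hyp_def by blast
qed



lemma leaky_scale: "0 < c \<Longrightarrow> leaky \<gamma> (c * t) = c * leaky \<gamma> t"
  unfolding leaky_def by (simp add: max_mult_distrib_left mult.left_commute)

lemma ex_kkt_exists: "\<exists>W :: (real^3^'k::finite) \<times> (real^3^'k). kkt_point P_obj (P_cons (1/2) ex_x ex_y) W"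
proof -
  define c where "c = 1 / sqrt (real (CARD('k) + CARD('k)))"
  define M where "M = real CARD('k) / sqrt (real (CARD('k) + CARD('k)))"
  have c: "0 < c" unfolding c_def by (rule c_pos)
  have Mc: "M * c = 1/2"
  proof -
    have k: "0 < real CARD('k)" by simp
    have "M * c = real CARD('k) / (sqrt (real (CARD('k) + CARD('k))))^2" unfolding M_def c_def
      by (simp add: power2_eq_square)
    also have "\<dots> = 1/2" using k by simp
    finally show ?thesis .
  qed
  define l1 :: real where "l1 = 40032040/25000009"
  define l2 :: real where "l2 = 8/5"
  define l3 :: real where "l3 = 40032000/25000009"
  define lam :: "3 \<Rightarrow> real" where "lam i = (if i = 1 then l1 else if i = 2 then l2 else l3)" for i
  define x1 where "x1 = ex_x 1"
  define x2 where "x2 = ex_x 2"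
  define x3 where "x3 = ex_x 3"
  define p where "p = l1 *\<^sub>R x1 + l2 *\<^sub>R x2 - (1/2 * l3) *\<^sub>R x3"
  define q where "q = l3 *\<^sub>R x3 - (1/2 * l1) *\<^sub>R x1 - (1/2 * l2) *\<^sub>R x2"
  define v where "v = c *\<^sub>R p"
  define u where "u = c *\<^sub>R q"
  define W :: "(real^3^'k) \<times> (real^3^'k)" where "W = ((\<chi> j. v), (\<chi> j. u))"
  note G = ex_gram[folded x1_def x2_def x3_def]
  have px: "p \<bullet> x1 = l1 - l3/2000" "p \<bullet> x2 = l2" "p \<bullet> x3 = l1/1000 - l3/2 * (1 + 1/1000000)"
    unfolding p_def by (simp_all add: inner_diff_left inner_add_left G)
  have qx: "q \<bullet> x1 = l3/1000 - l1/2" "q \<bullet> x2 = - l2/2" "q \<bullet> x3 = l3 * (1 + 1/1000000) - l1/2000"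
    unfolding q_def by (simp_all add: inner_diff_left inner_add_left G)
  have ps: "p \<bullet> x1 > 0" "p \<bullet> x2 > 0" "p \<bullet> x3 < 0" unfolding px l1_def l2_def l3_def by simp_all
  have qs: "q \<bullet> x1 < 0" "q \<bullet> x2 < 0" "q \<bullet> x3 > 0" unfolding qx l1_def l2_def l3_def by simp_all
  have rv: "\<And>j. fst W $ j = v" and ru: "\<And>j. snd W $ j = u" unfolding W_def by simp_all
  have netW: "net (1/2) W \<xi> = 1/2 * (leaky (1/2) (p \<bullet> \<xi>) - leaky (1/2) (q \<bullet> \<xi>))" for \<xi>
  proof -
    have "net (1/2) W \<xi> = M * leaky (1/2) (c * (p \<bullet> \<xi>)) - M * leaky (1/2) (c * (q \<bullet> \<xi>))"
      unfolding net_eq_rows[OF rv ru] M_def v_def u_def by simp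
    also have "\<dots> = (M * c) * (leaky (1/2) (p \<bullet> \<xi>) - leaky (1/2) (q \<bullet> \<xi>))"
      using c by (simp add: leaky_scale algebra_simps)
    finally show ?thesis using Mc by simp
  qed
  have lk: "leaky (1/2) a = a" if "a > 0" for a using that by (simp add: leaky_nonneg)
  have lk': "leaky (1/2) a = 1/2 * a" if "a < 0" for a using that by (simp add: leaky_nonpos)
  have tight: "ex_y i * net (1/2) W (ex_x i) = 1" for i
  proof -
    have "ex_y 1 * net (1/2) W (ex_x 1) = 1"
      unfolding netW ex_y_simps x1_def[symmetric] lk[OF ps(1)] lk'[OF qs(1)]
      unfolding px qx l1_def l3_def by simp
    moreover have "ex_y 2 * net (1/2) W (ex_x 2) = 1"
      unfolding netW ex_y_simps x2_def[symmetric] lk[OF ps(2)] lk'[OF qs(2)]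
      unfolding px qx l2_def by simp
    moreover have "ex_y 3 * net (1/2) W (ex_x 3) = 1"
      unfolding netW ex_y_simps x3_def[symmetric] lk'[OF ps(3)] lk[OF qs(3)]
      unfolding px qx l1_def l3_def by simp
    ultimately show ?thesis using exhaust_3[of i] by auto
  qed
  have vx: "v \<bullet> ex_x i \<noteq> 0" for i
    using exhaust_3[of i] ps c unfolding v_def x1_def x2_def x3_def by auto
  have ux: "u \<bullet> ex_x i \<noteq> 0" for i
    using exhaust_3[of i] qs c unfolding u_def x1_def x2_def x3_def by auto
  define B where "B i = ((\<chi> j. (- ex_y i * c * dleak (1/2) (fst W $ j \<bullet> ex_x i)) *\<^sub>R ex_x i),
                         (\<chi> j. (ex_y i * c * dleak (1/2) (snd W $ j \<bullet> ex_x i)) *\<^sub>R ex_x i))" for i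
  have Bd: "(P_cons (1/2) ex_x ex_y i has_derivative (\<lambda>h. B i \<bullet> h)) (at W)" for i
    unfolding B_def c_def by (rule Pcons_deriv) (simp_all add: rv ru vx ux)
  have dv: "dleak (1/2) (v \<bullet> x1) = 1" "dleak (1/2) (v \<bullet> x2) = 1" "dleak (1/2) (v \<bullet> x3) = 1/2"
    unfolding dleak_def v_def using ps c by (auto simp: zero_less_mult_iff)
  have du: "dleak (1/2) (u \<bullet> x1) = 1/2" "dleak (1/2) (u \<bullet> x2) = 1/2" "dleak (1/2) (u \<bullet> x3) = 1"
    unfolding dleak_def u_def using qs c by (auto simp: zero_less_mult_iff)
  have eqv: "v + (\<Sum>i\<in>UNIV. lam i *\<^sub>R (- ex_y i * c * dleak (1/2) (v \<bullet> ex_x i)) *\<^sub>R ex_x i) = 0"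
    unfolding sum_3 lam_def ex_y_simps x1_def[symmetric] x2_def[symmetric] x3_def[symmetric] dv
    unfolding v_def p_def by (simp add: algebra_simps)
  have equ: "u + (\<Sum>i\<in>UNIV. lam i *\<^sub>R (ex_y i * c * dleak (1/2) (u \<bullet> ex_x i)) *\<^sub>R ex_x i) = 0"
    unfolding sum_3 lam_def ex_y_simps x1_def[symmetric] x2_def[symmetric] x3_def[symmetric] du
    unfolding u_def q_def by (simp add: algebra_simps)
  have e1: "fst (W + (\<Sum>i\<in>UNIV. lam i *\<^sub>R B i)) $ j = (v + (\<Sum>i\<in>UNIV. lam i *\<^sub>R (- ex_y i * c * dleak (1/2) (v \<bullet> ex_x i)) *\<^sub>R ex_x i))" for j
    by (simp add: fst_sum B_def rv)
  have e2: "snd (W + (\<Sum>i\<in>UNIV. lam i *\<^sub>R B i)) $ j = (u + (\<Sum>i\<in>UNIV. lam i *\<^sub>R (ex_y i * c * dleak (1/2) (u \<bullet> ex_x i)) *\<^sub>R ex_x i))" for j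
    by (simp add: snd_sum B_def ru)
  have zero: "0 = W + (\<Sum>i\<in>UNIV. lam i *\<^sub>R B i)"
  proof (rule prod_eqI)
    show "fst 0 = fst (W + (\<Sum>i\<in>UNIV. lam i *\<^sub>R B i))"
      unfolding vec_eq_iff e1 eqv by simp
    show "snd 0 = snd (W + (\<Sum>i\<in>UNIV. lam i *\<^sub>R B i))"
      unfolding vec_eq_iff e2 equ by simp
  qed
  have "kkt_point P_obj (P_cons (1/2) ex_x ex_y) W"
    unfolding kkt_point_def
  proof (intro conjI exI[of _ lam])
    show "\<forall>n. P_cons (1/2) ex_x ex_y n W \<le> 0" using tight unfolding P_cons_def by simp
    show "\<forall>n. 0 \<le> lam n" unfolding lam_def l1_def l2_def l3_def by simp
    show "\<forall>n. lam n * P_cons (1/2) ex_x ex_y n W = 0" using tight unfolding P_cons_def by simp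
    show "0 \<in> {a + (\<Sum>n\<in>UNIV. lam n *\<^sub>R b n) |a b.
            a \<in> clarke_subdiff P_obj W \<and> (\<forall>n. b n \<in> clarke_subdiff (P_cons (1/2) ex_x ex_y n) W)}"
      using zero clarke_mem[OF P_obj_deriv] clarke_mem[OF Bd] by blast
  qed
  then show ?thesis by blast
qed



lemma sqnorm_deriv: "((\<lambda>z. (1/2) * (norm z)^2) has_derivative (\<lambda>h. w \<bullet> h)) (at (w::'a::real_inner))"
  unfolding power2_norm_eq_inner
  by (auto intro!: derivative_eq_intros simp: inner_commute)

lemma lincons_deriv: "((\<lambda>z. \<beta> - yi * (z \<bullet> xi)) has_derivative (\<lambda>h. (- yi *\<^sub>R xi) \<bullet> h)) (at (w::'a::real_inner))"
  by (auto intro!: derivative_eq_intros simp: inner_commute)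

lemma ex_not_kkt:
  fixes W :: "(real^3^'k::finite) \<times> (real^3^'k)"
  assumes K: "kkt_point P_obj (P_cons (1/2) ex_x ex_y) W"
    and rv: "\<And>j. fst W $ j = v" and ru: "\<And>j. snd W $ j = u" and b: "\<beta> > 0"
  shows "\<not> kkt_point (\<lambda>z. (1/2) * (norm z)^2) (\<lambda>i z. \<beta> - ex_y i * (z \<bullet> ex_x i)) (zvec CARD('k) CARD('k) v u)"
proof
  assume KZ: "kkt_point (\<lambda>z. (1/2) * (norm z)^2) (\<lambda>i z. \<beta> - ex_y i * (z \<bullet> ex_x i)) (zvec CARD('k) CARD('k) v u)"
  define k where "k = CARD('k)"
  define s where "s = 1 / sqrt (real (k + k))"
  define M where "M = real k / sqrt (real (k + k))"
  have s: "s > 0" unfolding s_def k_def by (rule c_pos)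
  have Mp: "M > 0" unfolding M_def k_def by simp
  have g0: "(0::real) < 1/2" and g1: "(1/2::real) < 1" by simp_all
  note P1 = part1[where \<gamma>="1/2" and x=ex_x and y=ex_y and W=W, OF conjI[OF g0 conjI[OF g1 conjI[OF ex_data K]]]]
  from P1 obtain v' u' lam where tight: "\<forall>i. ex_y i * net (1/2) W (ex_x i) = 1"
    and rv': "\<forall>j. fst W $ j = v'" and ru': "\<forall>j. snd W $ j = u'"
    and lamb: "\<forall>i. 1 / (2 * (Rmax ex_x)^2) < lam i \<and> lam i < 3 / (2 * (1/2)^2 * (Rmin ex_x)^2)"
    and vf: "v' = (1 / sqrt (real (k + k))) *\<^sub>R (\<Sum>i | ex_y i = 1. lam i *\<^sub>R ex_x i)
                 - ((1/2) / sqrt (real (k + k))) *\<^sub>R (\<Sum>i | ex_y i = -1. lam i *\<^sub>R ex_x i)"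
    and uf: "u' = (1 / sqrt (real (k + k))) *\<^sub>R (\<Sum>i | ex_y i = -1. lam i *\<^sub>R ex_x i)
                 - ((1/2) / sqrt (real (k + k))) *\<^sub>R (\<Sum>i | ex_y i = 1. lam i *\<^sub>R ex_x i)"
    and sg: "\<forall>i. ex_y i * (v' \<bullet> ex_x i) > 0 \<and> ex_y i * (u' \<bullet> ex_x i) < 0"
    unfolding Let_def k_def by blast
  have vv: "v' = v" using rv rv' by metis
  have uu: "u' = u" using ru ru' by metis
  have r0: "0 < 1/(2*(Rmax ex_x)^2)" unfolding ex_Rmax by simp
  have lpos: "lam i > 0" for i using lamb[rule_format, of i] r0 by linarith
  define x1 where "x1 = ex_x 1"
  define x2 where "x2 = ex_x 2"
  define x3 where "x3 = ex_x 3"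
  note G = ex_gram[folded x1_def x2_def x3_def]
  have S1: "{i. ex_y i = 1} = {1, 2}" using exhaust_3 by (auto simp: ex_y_def)
  have S2: "{i. ex_y i = -1} = {3}" using exhaust_3 by (auto simp: ex_y_def)
  have v_eq: "v = s *\<^sub>R (lam 1 *\<^sub>R x1 + lam 2 *\<^sub>R x2) - (s/2) *\<^sub>R (lam 3 *\<^sub>R x3)"
    unfolding vv[symmetric] vf S1 S2 s_def x1_def x2_def x3_def by simp
  have u_eq: "u = s *\<^sub>R (lam 3 *\<^sub>R x3) - (s/2) *\<^sub>R (lam 1 *\<^sub>R x1 + lam 2 *\<^sub>R x2)"
    unfolding uu[symmetric] uf S1 S2 s_def x1_def x2_def x3_def by simp
  have netW: "net (1/2) W \<xi> = M * leaky (1/2) (v \<bullet> \<xi>) - M * leaky (1/2) (u \<bullet> \<xi>)" for \<xi>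
    unfolding M_def k_def by (rule net_eq_rows[OF rv ru])
  have t1: "M * ((v - (1/2) *\<^sub>R u) \<bullet> x1) = 1"
  proof -
    have "v \<bullet> x1 > 0" "u \<bullet> x1 < 0" using sg[rule_format, of 1] vv uu by (simp_all add: ex_y_simps x1_def)
    then show ?thesis using tight[rule_format, of 1] unfolding netW ex_y_simps x1_def[symmetric]
      by (simp add: leaky_nonneg leaky_nonpos inner_diff_left algebra_simps)
  qed
  have t2: "M * ((v - (1/2) *\<^sub>R u) \<bullet> x2) = 1"
  proof -
    have "v \<bullet> x2 > 0" "u \<bullet> x2 < 0" using sg[rule_format, of 2] vv uu by (simp_all add: ex_y_simps x2_def)
    then show ?thesis using tight[rule_format, of 2] unfolding netW ex_y_simps x2_def[symmetric]
      by (simp add: leaky_nonneg leaky_nonpos inner_diff_left algebra_simps)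
  qed
  have T: "(5/4) * lam 1 - lam 3 / 1000 = (5/4) * lam 2"
  proof -
    have "(v - (1/2) *\<^sub>R u) \<bullet> x1 = (v - (1/2) *\<^sub>R u) \<bullet> x2" using t1 t2 Mp by (metis mult_left_cancel less_irrefl)
    moreover have "(v - (1/2) *\<^sub>R u) \<bullet> x1 = s * ((5/4) * lam 1 - lam 3 / 1000)"
      unfolding v_eq u_eq by (simp add: inner_diff_left inner_add_left G; simp add: field_simps)
    moreover have "(v - (1/2) *\<^sub>R u) \<bullet> x2 = s * ((5/4) * lam 2)"
      unfolding v_eq u_eq by (simp add: inner_diff_left inner_add_left G; simp add: field_simps)
    ultimately have "s * ((5/4) * lam 1 - lam 3 / 1000) = s * ((5/4) * lam 2)" by simp
    then show ?thesis using s by simp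
  qed
  define z where "z = zvec CARD('k) CARD('k) v u"
  define w where "w = lam 1 *\<^sub>R x1 + lam 2 *\<^sub>R x2 - lam 3 *\<^sub>R x3"
  have vu: "v - u = s *\<^sub>R w + (s/2) *\<^sub>R w"
    unfolding v_eq u_eq w_def by (simp add: algebra_simps)
  have zM: "z = M *\<^sub>R (v - u)" unfolding z_def zvec_def M_def k_def by (simp add: scaleR_diff_right)
  have z_eq: "z = (M * s * (3/2)) *\<^sub>R w"
  proof -
    have "z = M *\<^sub>R (s *\<^sub>R w + (s/2) *\<^sub>R w)" unfolding zM vu ..
    also have "s *\<^sub>R w + (s/2) *\<^sub>R w = (s * (3/2)) *\<^sub>R w" by (simp add: scaleR_left_distrib[symmetric])
    finally show ?thesis by simp
  qed
  define Kz where "Kz = M * s * (3/2)"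
  have Kz: "Kz > 0" unfolding Kz_def using Mp s by simp
  from KZ obtain \<mu> a bb where mu0: "\<forall>i. 0 \<le> \<mu> i" and cs: "\<forall>i. \<mu> i * (\<beta> - ex_y i * (z \<bullet> ex_x i)) = 0"
    and a: "a \<in> clarke_subdiff (\<lambda>z. (1/2) * (norm z)^2) z"
    and bb: "\<forall>i. bb i \<in> clarke_subdiff (\<lambda>z. \<beta> - ex_y i * (z \<bullet> ex_x i)) z"
    and zero: "0 = a + (\<Sum>i\<in>UNIV. \<mu> i *\<^sub>R bb i)"
    unfolding kkt_point_def z_def by blast
  have "clarke_subdiff (\<lambda>z. (1/2) * (norm z)^2) z \<subseteq> {id z}"
    by (rule clarke_smooth) (simp_all only: id_apply sqnorm_deriv continuous_on_id)
  then have az: "a = z" using a by auto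
  have "bb i = - ex_y i *\<^sub>R ex_x i" for i
  proof -
    have "clarke_subdiff (\<lambda>z. \<beta> - ex_y i * (z \<bullet> ex_x i)) z \<subseteq> {(\<lambda>_. - ex_y i *\<^sub>R ex_x i) z}"
      by (rule clarke_smooth) (simp_all only: lincons_deriv continuous_on_const)
    then show ?thesis using bb by auto
  qed
  then have z_mu: "z = \<mu> 1 *\<^sub>R x1 + \<mu> 2 *\<^sub>R x2 - \<mu> 3 *\<^sub>R x3"
    using zero az unfolding sum_3 x1_def x2_def x3_def ex_y_simps
    by (simp add: algebra_simps eq_neg_iff_add_eq_0[symmetric] ex_y_simps)
  have e2: "axis 2 1 \<bullet> x1 = 0" "axis 2 1 \<bullet> x2 = 1" "axis 2 1 \<bullet> x3 = 0"
    unfolding x1_def x2_def x3_def ex_x_simps by (simp_all add: inner_axis_axis inner_add_right)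
  have e3: "axis 3 1 \<bullet> x1 = 0" "axis 3 1 \<bullet> x2 = 0" "axis 3 1 \<bullet> x3 = 1"
    unfolding x1_def x2_def x3_def ex_x_simps by (simp_all add: inner_axis_axis inner_add_right)
  have m2: "\<mu> 2 = Kz * lam 2"
    using arg_cong[OF z_mu, of "\<lambda>w. axis 2 1 \<bullet> w"] arg_cong[OF z_eq, of "\<lambda>w. axis 2 1 \<bullet> w"]
    unfolding Kz_def by (simp add: inner_diff_right inner_add_right e2 w_def)
  have m3: "\<mu> 3 = Kz * lam 3"
    using arg_cong[OF z_mu, of "\<lambda>w. axis 3 1 \<bullet> w"] arg_cong[OF z_eq, of "\<lambda>w. axis 3 1 \<bullet> w"]
    unfolding Kz_def by (simp add: inner_diff_right inner_add_right e3 w_def)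
  have m1: "\<mu> 1 = Kz * lam 1"
  proof -
    have "z \<bullet> x1 = \<mu> 1 - \<mu> 3 / 1000" unfolding z_mu by (simp add: inner_diff_left inner_add_left G)
    moreover have "z \<bullet> x1 = Kz * (lam 1 - lam 3 / 1000)" unfolding z_eq Kz_def[symmetric] w_def
      by (simp add: inner_diff_left inner_add_left G algebra_simps)
    ultimately show ?thesis using m3 by (simp add: algebra_simps)
  qed
  have zx1: "z \<bullet> x1 = \<beta>"
  proof -
    have "\<mu> 1 > 0" using m1 Kz lpos[of 1] by simp
    then show ?thesis using cs[rule_format, of 1] unfolding ex_y_simps x1_def by simp
  qed
  have zx2: "z \<bullet> x2 = \<beta>"
  proof -
    have "\<mu> 2 > 0" using m2 Kz lpos[of 2] by simp
    then show ?thesis using cs[rule_format, of 2] unfolding ex_y_simps x2_def by simp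
  qed
  have "Kz * (lam 1 - lam 3 / 1000) = Kz * lam 2"
  proof -
    have "z \<bullet> x1 = Kz * (lam 1 - lam 3 / 1000)" unfolding z_eq Kz_def[symmetric] w_def
      by (simp add: inner_diff_left inner_add_left G algebra_simps)
    moreover have "z \<bullet> x2 = Kz * lam 2" unfolding z_eq Kz_def[symmetric] w_def
      by (simp add: inner_diff_left inner_add_left G algebra_simps)
    ultimately show ?thesis using zx1 zx2 by simp
  qed
  then have "lam 1 - lam 3 / 1000 = lam 2" using Kz by simp
  then have "lam 3 = 0" using T by linarith
  then show False using lpos[of 3] by simp
qed


theorem mainTheorem1:
  shows
  "(\<forall>(\<gamma>::real) (x :: 'n::finite \<Rightarrow> real^'d) (y :: 'n \<Rightarrow> real)
       (W :: (real^'d^'m1::finite) \<times> (real^'d^'m2::finite)).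
      0 < \<gamma> \<and> \<gamma> < 1 \<and> data_hyp \<gamma> x y \<and> kkt_point P_obj (P_cons \<gamma> x y) W \<longrightarrow>
      (let m1 = CARD('m1); m2 = CARD('m2); m = m1 + m2 in
       (\<forall>i. y i * net \<gamma> W (x i) = 1) \<and>
       (\<exists>v u. (\<forall>j. fst W $ j = v) \<and> (\<forall>j. snd W $ j = u) \<and>
          dim (span (range (\<lambda>j. fst W $ j) \<union> range (\<lambda>j. snd W $ j))) \<le> 2 \<and>
          (\<exists>lam :: 'n \<Rightarrow> real.
             (\<forall>i. 1 / (2 * (Rmax x)^2) < lam i \<and> lam i < 3 / (2 * \<gamma>^2 * (Rmin x)^2)) \<and>
             v = (1 / sqrt (real m)) *\<^sub>R (\<Sum>i | y i = 1. lam i *\<^sub>R x i)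
                 - (\<gamma> / sqrt (real m)) *\<^sub>R (\<Sum>i | y i = -1. lam i *\<^sub>R x i) \<and>
             u = (1 / sqrt (real m)) *\<^sub>R (\<Sum>i | y i = -1. lam i *\<^sub>R x i)
                 - (\<gamma> / sqrt (real m)) *\<^sub>R (\<Sum>i | y i = 1. lam i *\<^sub>R x i)) \<and>
          (\<forall>i. y i * (v \<bullet> x i) > 0 \<and> y i * (u \<bullet> x i) < 0) \<and>
          P_global_opt \<gamma> x y W \<and> (\<forall>W'. P_global_opt \<gamma> x y W' \<longrightarrow> W' = W) \<and>
          cvx_global_opt m1 m2 \<gamma> x y v u \<and>
          (\<forall>v' u'. cvx_global_opt m1 m2 \<gamma> x y v' u' \<longrightarrow> v' = v \<and> u' = u) \<and>
          (\<forall>\<xi>. sign (net \<gamma> W \<xi>) = sign (zvec m1 m2 v u \<bullet> \<xi>)) \<and>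
          (\<forall>i. y i * (zvec m1 m2 v u \<bullet> x i) \<ge> 1) \<and>
          (\<forall>zs. minnorm_sep x y zs \<longrightarrow>
             norm (zvec m1 m2 v u)
               \<le> 2 / (sqrt (real (min m1 m2) / real (max m1 m2)) + \<gamma>) * norm zs))))
   \<and>
   (\<exists>(x :: 3 \<Rightarrow> real^3) (y :: 3 \<Rightarrow> real).
      data_hyp (1/2) x y \<and>
      (\<exists>W :: (real^3^'k::finite) \<times> (real^3^'k). kkt_point P_obj (P_cons (1/2) x y) W) \<and>
      (\<forall>(W :: (real^3^'k) \<times> (real^3^'k)) v u.
         kkt_point P_obj (P_cons (1/2) x y) W \<and> (\<forall>j. fst W $ j = v) \<and> (\<forall>j. snd W $ j = u) \<longrightarrow>
         (\<forall>\<beta>>0. \<not> kkt_point (\<lambda>z. (1/2) * (norm z)^2) (\<lambda>i z. \<beta> - y i * (z \<bullet> x i))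
                      (zvec CARD('k) CARD('k) v u))))"
  apply (rule conjI)
   apply (intro allI impI)
   apply (rule part1, assumption)
  apply (intro exI[of _ ex_x] exI[of _ ex_y] conjI allI impI)
    apply (rule ex_data)
   apply (rule ex_kkt_exists)
  apply (rule ex_not_kkt)
     apply auto
  done

end
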